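(* Let $p(x_1,\dots,x_n)=t_1+\dots+t_r$ be a polynomial in normalized form as described in the context. Then for every $1\le j\le r$ the language $L(t_j)$ is accepted by some real-time (two-way) cellular automaton, i.e., $L(t_j)\in\mathscr{L}_{rt}(\mathrm{CA})$.
   Context: Normalized polynomial: $p(x_1,\dots,x_n)=t_1+\dots+t_r$ with integer coefficients, each term $t_j=s_jx_1^{i_{j,1}}\cdots x_n^{i_{j,n}}$ with $s_j\in\{+1,-1\}$ and exponents $i_{j,m}\ge 0$; there is $1\le p_0\le r$ with $s_1=\dots=s_{p_0}=1$, $s_{p_0+1}=\dots=s_r=-1$, and constant terms appear only at the end, each equal to $-1$. For a positive term $t_j$ ($j\le p_0$): $L(t_j)=\{b_1^{\alpha_1}\cdots b_n^{\alpha_n}c_1^{\alpha_1^{i_{j,1}}}\cdots c_n^{\alpha_n^{i_{j,n}}}d_1^{2^n\alpha_1^{i_{j,1}}\cdots\alpha_n^{i_{j,n}}}\text{¢}\mid \alpha_1,\dots,\alpha_n\ge0\}$. For a negative non-constant term, $L(t_j)$ is defined identically but with $d_2$ in place of $d_1$. For a negative constant term, $L(t_j)=\{d_2^{2^n}\text{¢}\}$. Here $b_m,c_m,d_1,d_2,\text{¢}$ are distinct symbols. A real-time CA is a synchronous linear array of identical finite automata (cells $1,\dots,|w|$ initialized with the input letters, each cell updating from its own state and information sent by both neighbors, outer cells receiving a boundary symbol once at the first step) that accepts $w$ iff the leftmost cell enters an accepting state within $|w|$ steps; $\mathscr{L}_{rt}(\mathrm{CA})$ is the family of languages so accepted. 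*)

theory Defs
  imports Main
begin

text \<open>Symbols b_m, c_m (m = 1..n), d_1, d_2 and the cent sign.\<close>
datatype sym = B nat | C nat | D1 | D2 | Cent

definition blocks :: "nat \<Rightarrow> (nat \<Rightarrow> sym) \<Rightarrow> (nat \<Rightarrow> nat) \<Rightarrow> sym list" where
  "blocks n x f = concat (map (\<lambda>m. replicate (f m) (x m)) [1..<Suc n])"

definition term_word :: "nat \<Rightarrow> (nat \<Rightarrow> nat) \<Rightarrow> sym \<Rightarrow> (nat \<Rightarrow> nat) \<Rightarrow> sym list" where
  "term_word n e d \<alpha> =
     blocks n B \<alpha> @ blocks n C (\<lambda>m. \<alpha> m ^ e m)
     @ replicate (2 ^ n * (\<Prod>m\<in>{1..n}. \<alpha> m ^ e m)) d @ [Cent]"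

definition mono_lang :: "nat \<Rightarrow> (nat \<Rightarrow> nat) \<Rightarrow> sym \<Rightarrow> sym list set" where
  "mono_lang n e d = {term_word n e d \<alpha> | \<alpha>. True}"

text \<open>Term j of a polynomial with signs s and exponent matrix ex (ex j m = i_{j,m}).\<close>
definition is_const_term :: "nat \<Rightarrow> (nat \<Rightarrow> nat \<Rightarrow> nat) \<Rightarrow> nat \<Rightarrow> bool" where
  "is_const_term n ex j \<longleftrightarrow> (\<forall>m\<in>{1..n}. ex j m = 0)"

definition L_term :: "nat \<Rightarrow> (nat \<Rightarrow> int) \<Rightarrow> (nat \<Rightarrow> nat \<Rightarrow> nat) \<Rightarrow> nat \<Rightarrow> sym list set" where
  "L_term n s ex j =
     (if s j = 1 then mono_lang n (ex j) D1
      else if is_const_term n ex j then {replicate (2 ^ n) D2 @ [Cent]}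
      else mono_lang n (ex j) D2)"

definition normalized :: "nat \<Rightarrow> nat \<Rightarrow> nat \<Rightarrow> (nat \<Rightarrow> int) \<Rightarrow> (nat \<Rightarrow> nat \<Rightarrow> nat) \<Rightarrow> bool" where
  "normalized n r p0 s ex \<longleftrightarrow>
     1 \<le> p0 \<and> p0 \<le> r \<and>
     (\<forall>j\<in>{1..p0}. s j = 1) \<and> (\<forall>j\<in>{p0<..r}. s j = -1) \<and>
     (\<forall>j\<in>{1..r}. is_const_term n ex j \<longrightarrow>
        s j = -1 \<and> (\<forall>k\<in>{j..r}. is_const_term n ex k))"

text \<open>What a cell receives from a neighbour: the boundary symbol (outer cells, first
  step only), nothing (outer cells, later steps), or the neighbour's state.\<close>
datatype 'q nbr = Boundary | Silent | St 'q

record ('a) ca =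
  states :: "nat set"
  init :: "'a \<Rightarrow> nat"
  delta :: "nat nbr \<Rightarrow> nat \<Rightarrow> nat nbr \<Rightarrow> nat"
  accepting :: "nat set"

definition wf_ca :: "'a ca \<Rightarrow> bool" where
  "wf_ca M \<longleftrightarrow> finite (states M) \<and> accepting M \<subseteq> states M \<and>
     (\<forall>a. init M a \<in> states M) \<and>
     (\<forall>l q r. q \<in> states M \<longrightarrow> (\<forall>p. l = St p \<longrightarrow> p \<in> states M) \<longrightarrow>
        (\<forall>p. r = St p \<longrightarrow> p \<in> states M) \<longrightarrow> delta M l q r \<in> states M)"

text \<open>Configuration after t steps on input w; cells are numbered 1..length w.\<close>
fun cfg :: "'a ca \<Rightarrow> 'a list \<Rightarrow> nat \<Rightarrow> nat \<Rightarrow> nat" where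
  "cfg M w 0 i = init M (w ! (i - 1))"
| "cfg M w (Suc t) i =
     delta M
       (if i = 1 then (if t = 0 then Boundary else Silent) else St (cfg M w t (i - 1)))
       (cfg M w t i)
       (if i = length w then (if t = 0 then Boundary else Silent) else St (cfg M w t (i + 1)))"

definition ca_accepts :: "'a ca \<Rightarrow> 'a list \<Rightarrow> bool" where
  "ca_accepts M w \<longleftrightarrow> w \<noteq> [] \<and> (\<exists>t\<le>length w. cfg M w t 1 \<in> accepting M)"

definition rt_lang :: "'a ca \<Rightarrow> 'a list set" where
  "rt_lang M = {w. ca_accepts M w}"

definition L_rt_CA :: "'a list set set" where
  "L_rt_CA = {L. \<exists>M. wf_ca M \<and> rt_lang M = L}"

end

theory Submission
  imports Defs "HOL-Library.Countable_Set"
begin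


section \<open>Layer 1: abstract CA\<close>

fun nmap :: "('a \<Rightarrow> 'b) \<Rightarrow> 'a nbr \<Rightarrow> 'b nbr" where
  "nmap f Boundary = Boundary" | "nmap f Silent = Silent" | "nmap f (St q) = St (f q)"

fun acfg :: "('q nbr \<Rightarrow> 'q \<Rightarrow> 'q nbr \<Rightarrow> 'q) \<Rightarrow> ('a \<Rightarrow> 'q) \<Rightarrow> 'a list \<Rightarrow> nat \<Rightarrow> nat \<Rightarrow> 'q" where
  "acfg d ini w 0 i = ini (w ! (i - 1))"
| "acfg d ini w (Suc t) i =
     d (if i = 1 then (if t = 0 then Boundary else Silent) else St (acfg d ini w t (i - 1)))
       (acfg d ini w t i)
       (if i = length w then (if t = 0 then Boundary else Silent) else St (acfg d ini w t (i + 1)))"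

definition closedQ :: "'q set \<Rightarrow> ('q nbr \<Rightarrow> 'q \<Rightarrow> 'q nbr \<Rightarrow> 'q) \<Rightarrow> bool" where
  "closedQ Q d \<longleftrightarrow> (\<forall>l q r. q \<in> Q \<longrightarrow> (\<forall>p. l = St p \<longrightarrow> p \<in> Q) \<longrightarrow>
        (\<forall>p. r = St p \<longrightarrow> p \<in> Q) \<longrightarrow> d l q r \<in> Q)"

lemma acfg_in:
  assumes "closedQ Q d" "\<And>a. ini a \<in> Q"
  shows "acfg d ini w t i \<in> Q"
  using assms by (induction t arbitrary: i) (auto simp: closedQ_def)

lemma abstract_ca:
  assumes fin: "finite Q" and cl: "closedQ Q d" and ini: "\<And>a. ini a \<in> Q"
  shows "{w. w \<noteq> [] \<and> (\<exists>t\<le>length w. acc (acfg d ini w t 1))} \<in> L_rt_CA"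
proof -
  have cQ: "countable Q" using fin by (rule countable_finite)
  define enc where "enc = to_nat_on Q"
  define dec where "dec = from_nat_into Q"
  have de: "\<And>x. x \<in> Q \<Longrightarrow> dec (enc x) = x" using cQ unfolding enc_def dec_def by simp
  have ie: "inj_on enc Q" using cQ unfolding enc_def by auto
  define M where "M = \<lparr>states = enc ` Q, init = (\<lambda>a. enc (ini a)),
     delta = (\<lambda>l q r. enc (d (nmap dec l) (dec q) (nmap dec r))),
     accepting = enc ` (Q \<inter> {q. acc q})\<rparr>"
  have wf: "wf_ca M"
    unfolding wf_ca_def M_def using fin ini
    apply (auto)
    subgoal for l x r
      apply (rule imageI)
      using cl[unfolded closedQ_def, rule_format, of x "nmap dec l" "nmap dec r"]
      by (cases l; cases r; auto simp: de)
    done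
  have eq: "cfg M w t i = enc (acfg d ini w t i)" for w t i
  proof (induction t arbitrary: i)
    case 0 then show ?case by (simp add: M_def)
  next
    case (Suc t)
    have q: "\<And>j. dec (enc (acfg d ini w t j)) = acfg d ini w t j"
      by (rule de, rule acfg_in[OF cl ini])
    have dl: "delta M = (\<lambda>l q r. enc (d (nmap dec l) (dec q) (nmap dec r)))" by (simp add: M_def)
    show ?case by (simp add: Suc dl q)
  qed
  have accq: "cfg M w t 1 \<in> accepting M \<longleftrightarrow> acc (acfg d ini w t 1)" for w t
  proof -
    have am: "accepting M = enc ` (Q \<inter> {q. acc q})" by (simp add: M_def)
    show ?thesis unfolding am eq
      using acfg_in[OF cl ini, where w=w and t=t and i=1] ie
      by (subst inj_on_image_mem_iff[OF ie]) auto
  qed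
  have "rt_lang M = {w. w \<noteq> [] \<and> (\<exists>t\<le>length w. acc (acfg d ini w t 1))}"
    unfolding rt_lang_def ca_accepts_def using accq by auto
  then show ?thesis using wf unfolding L_rt_CA_def by blast
qed


section \<open>Layer 2a: token piles\<close>

definition fl :: "nat \<Rightarrow> nat option \<Rightarrow> int" where
  "fl a r = (case r of None \<Rightarrow> 0 | Some b \<Rightarrow> if a = 3 then 1 else if a = 1 \<and> 1 \<le> b then -1 else 0)"

definition Jinv :: "nat \<Rightarrow> (nat \<Rightarrow> nat) \<Rightarrow> bool" where
  "Jinv N c \<longleftrightarrow> (\<forall>i. 1 \<le> i \<longrightarrow> i \<le> N \<longrightarrow> c i \<le> 3) \<and> (\<forall>i. 1 \<le> i \<longrightarrow> i < N \<longrightarrow> c i = 0 \<longrightarrow> c (Suc i) = 0)"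

lemma loc:
  assumes "a \<le> 3" "(r = None \<and> a = 0) \<or> (\<exists>b. r = Some b \<and> b \<le> 3 \<and> (a = 0 \<longrightarrow> b = 0))"
    "g \<in> {-1,0,1}" "g = -1 \<longrightarrow> 1 \<le> a"
  shows "0 \<le> int a - fl a r + g \<and> int a - fl a r + g \<le> 3 \<and>
     (int a - fl a r + g = 0 \<longrightarrow> a \<le> 1 \<and> (\<forall>b. r = Some b \<longrightarrow> b = 0))"
  using assms unfolding fl_def by (auto split: option.splits)

lemma flg: "fl z (Some a) \<in> {-1,0,1}" "fl z (Some a) = -1 \<longrightarrow> 1 \<le> a"
  unfolding fl_def by auto

lemma fl0: "a \<le> 1 \<Longrightarrow> fl a (Some 0) = 0" "fl 0 r = 0" "fl a None = 0"
  unfolding fl_def by (auto split: option.splits)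

lemma J_zero: assumes "Jinv N c" "c 1 = 0" shows "\<forall>i. 1 \<le> i \<longrightarrow> i \<le> N \<longrightarrow> c i = 0"
proof (intro allI impI)
  fix i assume "1 \<le> i" "i \<le> N"
  then show "c i = 0"
  proof (induction i)
    case 0 then show ?case by simp
  next
    case (Suc j) then show ?case using assms unfolding Jinv_def
      by (cases j) auto
  qed
qed

lemma J_sum_zero: assumes "Jinv N c" "1 \<le> N"
  shows "c 1 = 0 \<longleftrightarrow> (\<Sum>i\<in>{1..N}. c i) = 0"
  using J_zero[OF assms(1)] assms(2) by auto

lemma J_last: assumes "Jinv N c" "1 \<le> N" "(\<Sum>i\<in>{1..N}. c i) < N" shows "c N = 0"
proof (rule ccontr)
  assume "c N \<noteq> 0"
  have "\<forall>i. 1 \<le> i \<longrightarrow> i \<le> N \<longrightarrow> c i \<noteq> 0"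
  proof (intro allI impI)
    fix i assume i: "1 \<le> i" "i \<le> N"
    show "c i \<noteq> 0"
    proof
      assume z: "c i = 0"
      have "\<forall>k. i + k \<le> N \<longrightarrow> c (i + k) = 0"
      proof (intro allI)
        fix k show "i + k \<le> N \<longrightarrow> c (i + k) = 0"
          by (induction k) (use z i assms(1) in \<open>auto simp: Jinv_def\<close>)
      qed
      then have "c (i + (N - i)) = 0" using i by (metis le_add_diff_inverse order_refl)
      then show False using \<open>c N \<noteq> 0\<close> i by simp
    qed
  qed
  then have "(\<Sum>i\<in>{1..N}. (1::nat)) \<le> (\<Sum>i\<in>{1..N}. c i)"
    by (intro sum_mono) auto
  then show False using assms(3) by simp
qed

lemma arr_step:
  fixes c :: "nat \<Rightarrow> nat" and N :: nat and d :: int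
  defines "F \<equiv> \<lambda>i. fl (c i) (if i = N then None else Some (c (Suc i)))"
  defines "c' \<equiv> \<lambda>i. int (c i) - F i + (if i = 1 then d else F (i - 1))"
  assumes J: "Jinv N c" and N: "1 \<le> N" and S: "(\<Sum>i\<in>{1..N}. c i) < N"
    and d: "d \<in> {-1,0,1}" "d = -1 \<longrightarrow> c 1 \<noteq> 0"
  shows "\<forall>i. 1 \<le> i \<longrightarrow> i \<le> N \<longrightarrow> 0 \<le> c' i \<and> c' i \<le> 3"
    and "Jinv N (\<lambda>i. nat (c' i))"
    and "(\<Sum>i\<in>{1..N}. c' i) = int (\<Sum>i\<in>{1..N}. c i) + d"
proof -
  have cN: "c N = 0" using J_last[OF J N S] .
  have L: "0 \<le> c' i \<and> c' i \<le> 3 \<and> (c' i = 0 \<longrightarrow> c i \<le> 1 \<and> (i < N \<longrightarrow> c (Suc i) = 0))"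
    if i: "1 \<le> i" "i \<le> N" for i
  proof -
    let ?r = "if i = N then None else Some (c (Suc i))"
    let ?g = "if i = 1 then d else F (i - 1)"
    have a: "c i \<le> 3" using J i by (auto simp: Jinv_def)
    have r: "(?r = None \<and> c i = 0) \<or> (\<exists>b. ?r = Some b \<and> b \<le> 3 \<and> (c i = 0 \<longrightarrow> b = 0))"
      using J i cN by (auto simp: Jinv_def)
    have g: "?g \<in> {-1,0,1} \<and> (?g = -1 \<longrightarrow> 1 \<le> c i)"
    proof (cases "i = 1")
      case True then show ?thesis using d by auto
    next
      case False
      then have "?g = fl (c (i - 1)) (Some (c i))" using i by (simp add: F_def cN fl0)
      then show ?thesis using flg by auto
    qed
    have "c' i = int (c i) - fl (c i) ?r + ?g" by (simp add: c'_def F_def)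
    then show ?thesis using loc[OF a r, of ?g] g by auto
  qed
  show "\<forall>i. 1 \<le> i \<longrightarrow> i \<le> N \<longrightarrow> 0 \<le> c' i \<and> c' i \<le> 3" using L by auto
  show "Jinv N (\<lambda>i. nat (c' i))"
    unfolding Jinv_def
  proof (intro conjI allI impI)
    fix i assume "1 \<le> i" "i \<le> N" then show "nat (c' i) \<le> 3" using L by fastforce
  next
    fix i assume i: "1 \<le> i" "i < N" "nat (c' i) = 0"
    then have z: "c' i = 0" using L[of i] by auto
    then have ci: "c i \<le> 1" "c (Suc i) = 0" using L[of i] i by auto
    have "c' (Suc i) = int (c (Suc i)) - F (Suc i) + F i" using i by (simp add: c'_def)
    also have "\<dots> = 0" using ci i by (simp add: F_def fl0)
    finally show "nat (c' (Suc i)) = 0" by simp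
  qed
  obtain M where M: "N = Suc M" using N by (cases N) auto
  have s1: "(\<Sum>i\<in>{1..N}. F i) = (\<Sum>i\<in>{1..M}. F i)"
    using M cN by (simp add: F_def fl0)
  have s2: "(\<Sum>i\<in>{1..N}. (if i = 1 then d else F (i - 1))) = d + (\<Sum>i\<in>{1..M}. F i)"
  proof -
    have "(\<Sum>i\<in>{1..N}. (if i = 1 then d else F (i - 1))) =
        d + (\<Sum>i\<in>{Suc 1..Suc M}. (if i = 1 then d else F (i - 1)))"
      using M by (subst sum.atLeast_Suc_atMost) auto
    also have "(\<Sum>i\<in>{Suc 1..Suc M}. (if i = 1 then d else F (i - 1))) = (\<Sum>i\<in>{1..M}. F i)"
      by (subst sum.shift_bounds_cl_Suc_ivl) (rule sum.cong, auto)
    finally show ?thesis .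
  qed
  show "(\<Sum>i\<in>{1..N}. c' i) = int (\<Sum>i\<in>{1..N}. c i) + d"
    unfolding c'_def sum.distrib sum_subtractf s1 s2 by simp
qed

section \<open>Layer 2b: counter machines on CA\<close>

definition sg :: "int \<Rightarrow> int" where "sg x = max (-1) (min 1 x)"

definition cstep :: "'k set \<Rightarrow> ('c \<Rightarrow> 'b \<Rightarrow> ('k \<Rightarrow> bool) \<Rightarrow> 'c \<times> ('k \<Rightarrow> int)) \<Rightarrow>
    'c \<times> ('k \<Rightarrow> nat) \<Rightarrow> 'b \<Rightarrow> 'c \<times> ('k \<Rightarrow> nat)" where
  "cstep K ms cv b = (let q = fst cv; v = snd cv; res = ms q b (\<lambda>k. v k = 0) in
     (fst res, \<lambda>k. if k \<in> K then nat (int (v k) + sg (snd res k)) else 0))"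

definition crun where
  "crun K ms q0 bs = foldl (cstep K ms) (q0, \<lambda>k. 0) bs"

definition nb_p :: "('b option \<times> 'c \<times> ('k \<Rightarrow> nat)) nbr \<Rightarrow> 'k \<Rightarrow> nat option" where
  "nb_p r k = (case r of St u \<Rightarrow> Some (snd (snd u) k) | _ \<Rightarrow> None)"

definition nb_x :: "('b option \<times> 'c \<times> ('k \<Rightarrow> nat)) nbr \<Rightarrow> 'b option" where
  "nb_x r = (case r of St u \<Rightarrow> fst u | _ \<Rightarrow> None)"

definition c1 where
  "c1 ms q x p = (case x of None \<Rightarrow> (q, \<lambda>k. 0)
      | Some b \<Rightarrow> (fst (ms q b (\<lambda>k. p k = 0)),
                   \<lambda>k. if snd (ms q b (\<lambda>k. p k = 0)) k < 0 \<and> p k = 0 then 0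
                        else sg (snd (ms q b (\<lambda>k. p k = 0)) k)))"

definition cdelta :: "'k set \<Rightarrow> ('c \<Rightarrow> 'b \<Rightarrow> ('k \<Rightarrow> bool) \<Rightarrow> 'c \<times> ('k \<Rightarrow> int)) \<Rightarrow>
   ('b option \<times> 'c \<times> ('k \<Rightarrow> nat)) nbr \<Rightarrow> ('b option \<times> 'c \<times> ('k \<Rightarrow> nat)) \<Rightarrow>
   ('b option \<times> 'c \<times> ('k \<Rightarrow> nat)) nbr \<Rightarrow> ('b option \<times> 'c \<times> ('k \<Rightarrow> nat))" where
  "cdelta K ms l s r = (let x = fst s; q = fst (snd s); p = snd (snd s);
     qg = (case l of St u \<Rightarrow> (q, \<lambda>k. fl (snd (snd u) k) (Some (p k))) | _ \<Rightarrow> c1 ms q x p)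
   in (nb_x r, fst qg, \<lambda>k. if k \<in> K then nat (min 3 (int (p k) - fl (p k) (nb_p r k) + snd qg k)) else 0))"

lemma sg_range: "sg x \<in> {-1,0,1}" "x < 0 \<Longrightarrow> sg x = -1" "sg x = -1 \<Longrightarrow> x < 0" unfolding sg_def by auto

lemma take_Suc_nth': "t < length xs \<Longrightarrow> take (Suc t) xs = take t xs @ [xs ! t]"
  by (simp add: take_Suc_conv_app_nth)

lemma ca_sim:
  fixes w :: "'a list" and norm :: "'a \<Rightarrow> 'b" and qz :: 'c and K :: "'k set"
    and ms :: "'c \<Rightarrow> 'b \<Rightarrow> ('k \<Rightarrow> bool) \<Rightarrow> 'c \<times> ('k \<Rightarrow> int)"
  defines "ini \<equiv> \<lambda>a. (Some (norm a), qz, \<lambda>k. 0)"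
  defines "S \<equiv> \<lambda>t i. acfg (cdelta K ms) ini w t i"
  defines "R \<equiv> \<lambda>t. crun K ms qz (take t (map norm w))"
  assumes N: "1 \<le> length w"
  shows "t \<le> length w \<Longrightarrow>
     (\<forall>i. 1 \<le> i \<longrightarrow> i \<le> length w \<longrightarrow> fst (S t i) = (if i + t \<le> length w then Some (norm (w ! (i + t - 1))) else None))
   \<and> fst (snd (S t 1)) = fst (R t)
   \<and> (\<forall>k\<in>K. Jinv (length w) (\<lambda>i. snd (snd (S t i)) k) \<and> (\<Sum>i\<in>{1..length w}. snd (snd (S t i)) k) = snd (R t) k
          \<and> snd (R t) k \<le> t)
   \<and> (\<forall>k. k \<notin> K \<longrightarrow> (\<forall>i. snd (snd (S t i)) k = 0) \<and> snd (R t) k = 0)"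
proof (induction t)
  case 0
  show ?case by (auto simp: S_def R_def ini_def crun_def Jinv_def)
next
  case (Suc t)
  let ?N = "length w"
  from Suc have tN: "t < ?N" by simp
  from Suc.IH tN have IH1: "\<And>i. 1 \<le> i \<Longrightarrow> i \<le> ?N \<Longrightarrow> fst (S t i) = (if i + t \<le> ?N then Some (norm (w ! (i + t - 1))) else None)"
    and IH2: "fst (snd (S t 1)) = fst (R t)"
    and IH3: "\<And>k. k \<in> K \<Longrightarrow> Jinv ?N (\<lambda>i. snd (snd (S t i)) k) \<and> (\<Sum>i\<in>{1..?N}. snd (snd (S t i)) k) = snd (R t) k \<and> snd (R t) k \<le> t"
    and IH4: "\<And>k. k \<notin> K \<Longrightarrow> (\<forall>i. snd (snd (S t i)) k = 0) \<and> snd (R t) k = 0"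
    by auto
  define P where "P = (\<lambda>i. snd (snd (S t i)))"
  define q where "q = fst (snd (S t 1))"
  define b where "b = norm (w ! t)"
  have x1: "fst (S t 1) = Some b" using IH1[of 1] tN N by (simp add: b_def)
  have Rs: "R (Suc t) = cstep K ms (R t) b"
    unfolding R_def crun_def b_def using tN by (simp add: take_Suc_nth')
  have tests: "(\<lambda>k. P 1 k = 0) = (\<lambda>k. snd (R t) k = 0)"
  proof
    fix k show "(P 1 k = 0) = (snd (R t) k = 0)"
    proof (cases "k \<in> K")
      case True
      then show ?thesis using IH3[OF True] J_sum_zero[of ?N "\<lambda>i. P i k"] N by (auto simp: P_def)
    next
      case False then show ?thesis using IH4[OF False] by (simp add: P_def)
    qed
  qed
  define res where "res = ms q b (\<lambda>k. P 1 k = 0)"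
  define g where "g = (\<lambda>k. if snd res k < 0 \<and> P 1 k = 0 then 0 else sg (snd res k))"
  have S1: "S (Suc t) i = cdelta K ms (if i = 1 then (if t = 0 then Boundary else Silent) else St (S t (i - 1)))
       (S t i) (if i = ?N then (if t = 0 then Boundary else Silent) else St (S t (i + 1)))" for i
    by (simp add: S_def)
  have c1eq: "c1 ms q (fst (S t 1)) (P 1) = (fst res, g)"
    unfolding c1_def x1 res_def g_def by simp
  have pile: "snd (snd (S (Suc t) i)) k = (if k \<in> K then nat (min 3 (int (P i k) - fl (P i k)
       (if i = ?N then None else Some (P (Suc i) k)) + (if i = 1 then g k else fl (P (i - 1) k) (Some (P i k))))) else 0)"
    if "1 \<le> i" "i \<le> ?N" for i k
  proof (cases "i = 1")
    case True then show ?thesis using c1eq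
      by (auto simp: S1 cdelta_def Let_def nb_p_def P_def q_def)
  next
    case False then show ?thesis
      by (auto simp: S1 cdelta_def Let_def nb_p_def P_def)
  qed
  have ctl: "fst (snd (S (Suc t) 1)) = fst res"
    using c1eq by (auto simp: S1 cdelta_def Let_def P_def q_def)
  have R1: "fst (R (Suc t)) = fst res" "snd (R (Suc t)) k = (if k \<in> K then nat (int (snd (R t) k) + sg (snd res k)) else 0)" for k
    unfolding Rs cstep_def res_def q_def IH2 tests by (simp_all add: Let_def)
  show ?case
  proof (intro conjI ballI allI impI)
    fix i assume i: "1 \<le> i" "i \<le> ?N"
    show "fst (S (Suc t) i) = (if i + Suc t \<le> ?N then Some (norm (w ! (i + Suc t - 1))) else None)"
    proof (cases "i = ?N")
      case True then show ?thesis by (auto simp: S1 cdelta_def Let_def nb_x_def)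
    next
      case False
      then have "fst (S (Suc t) i) = fst (S t (Suc i))" by (auto simp: S1 cdelta_def Let_def nb_x_def)
      also have "\<dots> = (if Suc i + t \<le> ?N then Some (norm (w ! (Suc i + t - 1))) else None)"
        using IH1[of "Suc i"] i False by auto
      finally show ?thesis by simp
    qed
  next
    show "fst (snd (S (Suc t) 1)) = fst (R (Suc t))" using ctl R1 by simp
  next
    fix k assume kK: "k \<in> K"
    from IH3[OF kK] have J: "Jinv ?N (\<lambda>i. P i k)" and sm: "(\<Sum>i\<in>{1..?N}. P i k) = snd (R t) k"
      and le: "snd (R t) k \<le> t" by (auto simp: P_def)
    have d: "g k \<in> {-1,0,1}" "g k = -1 \<longrightarrow> P 1 k \<noteq> 0" using sg_range[of "snd res k"] by (auto simp: g_def)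
    note AS = arr_step[of ?N "\<lambda>i. P i k" "g k", OF J N _ d]
    have Slt: "(\<Sum>i\<in>{1..?N}. P i k) < ?N" using sm le tN by simp
    define c' where "c' = (\<lambda>i. int (P i k) - fl (P i k) (if i = ?N then None else Some (P (Suc i) k)) +
         (if i = 1 then g k else fl (P (i - 1) k) (if i - 1 = ?N then None else Some (P (Suc (i - 1)) k))))"
    have c'b: "\<forall>i. 1 \<le> i \<longrightarrow> i \<le> ?N \<longrightarrow> 0 \<le> c' i \<and> c' i \<le> 3"
      using AS(1)[OF Slt] unfolding c'_def .
    have new: "snd (snd (S (Suc t) i)) k = nat (c' i)" if "1 \<le> i" "i \<le> ?N" for i
    proof -
      have "i \<noteq> 1 \<Longrightarrow> i - 1 \<noteq> ?N" using that by auto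
      moreover have "Suc (i - Suc 0) = i" using that by simp
      ultimately have "snd (snd (S (Suc t) i)) k = nat (min 3 (c' i))"
        using pile[OF that, of k] kK unfolding c'_def by (auto simp: Suc_diff_1 that)
      then show ?thesis using c'b that by simp
    qed
    have Jn: "Jinv ?N (\<lambda>i. nat (c' i))" using AS(2)[OF Slt] unfolding c'_def .
    show "Jinv ?N (\<lambda>i. snd (snd (S (Suc t) i)) k)"
      using Jn new unfolding Jinv_def by auto
    have sn: "(\<Sum>i\<in>{1..?N}. c' i) = int (snd (R t) k) + g k"
      using AS(3)[OF Slt] sm unfolding c'_def by (simp del: of_nat_sum add: of_nat_sum[symmetric])
    have "int (\<Sum>i\<in>{1..?N}. snd (snd (S (Suc t) i)) k) = (\<Sum>i\<in>{1..?N}. int (nat (c' i)))"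
      by (simp add: new)
    also have "\<dots> = (\<Sum>i\<in>{1..?N}. c' i)" using c'b by (intro sum.cong) auto
    finally have sum_new: "int (\<Sum>i\<in>{1..?N}. snd (snd (S (Suc t) i)) k) = int (snd (R t) k) + g k"
      using sn by simp
    have zz: "P 1 k = 0 \<longleftrightarrow> snd (R t) k = 0" using tests by metis
    have vnew: "int (snd (R (Suc t)) k) = int (snd (R t) k) + g k"
      using R1(2)[of k] kK zz sg_range[of "snd res k"]
      by (auto simp: g_def)
    show "(\<Sum>i\<in>{1..?N}. snd (snd (S (Suc t) i)) k) = snd (R (Suc t)) k"
      using sum_new vnew by linarith
    have "g k \<le> 1" using d(1) by auto
    then show "snd (R (Suc t)) k \<le> Suc t" using vnew le by linarith
  next
    fix k i assume "k \<notin> K"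
    then show "snd (snd (S (Suc t) i)) k = 0" by (auto simp: S1 cdelta_def Let_def)
  next
    fix k assume "k \<notin> K"
    then show "snd (R (Suc t)) k = 0" using R1(2) \<open>k \<notin> K\<close> by simp
  qed
qed

theorem cm_ca:
  fixes norm :: "'a \<Rightarrow> 'b" and q0 :: 'c and K :: "'k set"
    and ms :: "'c \<Rightarrow> 'b \<Rightarrow> ('k \<Rightarrow> bool) \<Rightarrow> 'c \<times> ('k \<Rightarrow> int)"
  assumes fK: "finite K" and fC: "finite Cs" and fA: "finite A" and nA: "\<And>a. norm a \<in> A"
    and q0: "q0 \<in> Cs" and cl: "\<And>q b z. q \<in> Cs \<Longrightarrow> b \<in> A \<Longrightarrow> fst (ms q b z) \<in> Cs"
  shows "{w. w \<noteq> [] \<and> fst (crun K ms q0 (map norm w)) \<in> F} \<in> L_rt_CA"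
proof -
  define PP :: "('k \<Rightarrow> nat) set" where "PP = {f. \<forall>k. (k \<in> K \<longrightarrow> f k \<in> {0..3}) \<and> (k \<notin> K \<longrightarrow> f k = 0)}"
  define Q where "Q = insert None (Some ` A) \<times> Cs \<times> PP"
  define ini where "ini = (\<lambda>a. (Some (norm a), q0, \<lambda>k::'k. 0::nat))"
  define acc where "acc = (\<lambda>s::'b option \<times> 'c \<times> ('k \<Rightarrow> nat). fst s = None \<and> fst (snd s) \<in> F)"
  have fQ: "finite Q" unfolding Q_def PP_def
    using fA fC finite_set_of_finite_funs[OF fK, of "{0..3::nat}" 0] by auto
  have iQ: "\<And>a. ini a \<in> Q" unfolding ini_def Q_def PP_def using nA q0 by auto
  have cQ: "closedQ Q (cdelta K ms)"
    unfolding closedQ_def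
  proof (intro allI impI)
    fix l s r assume sQ: "s \<in> Q" and lQ: "\<forall>p. l = St p \<longrightarrow> p \<in> Q" and rQ: "\<forall>p. r = St p \<longrightarrow> p \<in> Q"
    obtain x q p where s: "s = (x, q, p)" by (cases s) auto
    have x: "x = None \<or> x \<in> Some ` A" and q: "q \<in> Cs" using sQ s by (auto simp: Q_def)
    have 1: "nb_x r \<in> insert None (Some ` A)" using rQ by (cases r) (auto simp: nb_x_def Q_def)
    have 2: "fst (case l of St u \<Rightarrow> (q, \<lambda>k. fl (snd (snd u) k) (Some (p k))) | _ \<Rightarrow> c1 ms q x p) \<in> Cs"
      using x q cl by (cases l) (auto simp: c1_def split: option.splits)
    show "cdelta K ms l s r \<in> Q"
      using 1 2 unfolding cdelta_def s Q_def PP_def Let_def fst_conv snd_conv by auto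
  qed
  note AC = abstract_ca[where acc=acc and ini=ini, OF fQ cQ iQ]
  have "{w. w \<noteq> [] \<and> (\<exists>t\<le>length w. acc (acfg (cdelta K ms) ini w t 1))} =
        {w. w \<noteq> [] \<and> fst (crun K ms q0 (map norm w)) \<in> F}"
  proof (intro Collect_cong conj_cong refl)
    fix w :: "'a list" assume "w \<noteq> []"
    then have N: "1 \<le> length w" by (cases w) auto
    note SIM = ca_sim[where w=w and norm=norm and qz=q0 and K=K and ms=ms, OF N, folded ini_def]
    show "(\<exists>t\<le>length w. acc (acfg (cdelta K ms) ini w t 1)) = (fst (crun K ms q0 (map norm w)) \<in> F)"
    proof
      assume "\<exists>t\<le>length w. acc (acfg (cdelta K ms) ini w t 1)"
      then obtain t where t: "t \<le> length w" "acc (acfg (cdelta K ms) ini w t 1)" by blast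
      from SIM[OF t(1)] N have "fst (acfg (cdelta K ms) ini w t 1) = (if 1 + t \<le> length w then Some (norm (w ! t)) else None)"
        by auto
      with t have tN: "t = length w" by (auto simp: acc_def split: if_splits)
      from SIM[OF t(1)] t(2) show "fst (crun K ms q0 (map norm w)) \<in> F"
        by (auto simp: acc_def tN)
    next
      assume F: "fst (crun K ms q0 (map norm w)) \<in> F"
      from SIM[of "length w"] N have "acc (acfg (cdelta K ms) ini w (length w) 1)"
        using F by (auto simp: acc_def)
      then show "\<exists>t\<le>length w. acc (acfg (cdelta K ms) ini w t 1)" by blast
    qed
  qed
  with AC show ?thesis by simp
qed



section \<open>Odometer (mixed radix counter)\<close>

type_synonym ost = "(nat \<Rightarrow> bool) \<times> (nat \<Rightarrow> nat) \<times> (nat \<Rightarrow> nat) \<times> bool"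

definition hasnz :: "nat \<Rightarrow> (nat \<Rightarrow> nat) \<Rightarrow> bool" where "hasnz L x \<longleftrightarrow> (\<exists>j<L. x j \<noteq> 0)"
definition jz :: "nat \<Rightarrow> (nat \<Rightarrow> nat) \<Rightarrow> nat" where "jz L x = (LEAST j. j < L \<and> x j \<noteq> 0)"

definition ostep :: "nat \<Rightarrow> ost \<Rightarrow> ost" where
  "ostep L st = (let sw = fst st; x = fst (snd st); y = fst (snd (snd st)); ov = snd (snd (snd st)) in
     if hasnz L x then
       (\<lambda>j. if j < jz L x then \<not> sw j else sw j,
        \<lambda>j. if j < jz L x then y j else if j = jz L x then x j - 1 else x j,
        \<lambda>j. if j < jz L x then x j else if j = jz L x then y j + 1 else y j, ov)
     else (sw, x, y, True))"

definition oinit :: "(nat \<Rightarrow> nat) \<Rightarrow> ost" where "oinit r = (\<lambda>_. False, \<lambda>j. r j - 1, \<lambda>_. 0, False)"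

definition pr :: "(nat \<Rightarrow> nat) \<Rightarrow> nat \<Rightarrow> nat" where "pr r j = (\<Prod>i\<in>{0..<j}. r i)"

definition oval :: "nat \<Rightarrow> (nat \<Rightarrow> nat) \<Rightarrow> (nat \<Rightarrow> nat) \<Rightarrow> nat" where
  "oval L r x = (\<Sum>j\<in>{0..<L}. (r j - 1 - x j) * pr r j)"

definition oinv :: "nat \<Rightarrow> (nat \<Rightarrow> nat) \<Rightarrow> ost \<Rightarrow> bool" where
  "oinv L r st \<longleftrightarrow> (\<forall>j<L. fst (snd st) j + fst (snd (snd st)) j = r j - 1)"

lemma pr_pos: "\<forall>j<J. 1 \<le> r j \<Longrightarrow> 1 \<le> pr r J"
  unfolding pr_def by (induction J) auto

lemma pr_Suc: "pr r (Suc j) = pr r j * r j" unfolding pr_def by simp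

lemma tele: "\<forall>j<J. 1 \<le> r j \<Longrightarrow> (\<Sum>j\<in>{0..<J}. (r j - 1) * pr r j) = pr r J - 1"
proof (induction J)
  case 0 then show ?case by (simp add: pr_def)
next
  case (Suc J)
  have p: "1 \<le> pr r J" using pr_pos Suc.prems by auto
  have rJ: "1 \<le> r J" using Suc.prems by auto
  have "(\<Sum>j\<in>{0..<Suc J}. (r j - 1) * pr r j) = pr r J - 1 + (r J - 1) * pr r J" using Suc by simp
  also have "\<dots> = pr r J * r J - 1"
  proof -
    obtain P R where "pr r J = Suc P" "r J = Suc R" using p rJ by (metis Suc_le_D One_nat_def)
    then show ?thesis by (simp add: algebra_simps)
  qed
  finally show ?case by (simp add: pr_Suc)
qed

lemma jz_props: assumes "hasnz L x"
  shows "jz L x < L" "x (jz L x) \<noteq> 0" "\<And>j. j < jz L x \<Longrightarrow> x j = 0"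
proof -
  obtain j where j: "j < L" "x j \<noteq> 0" using assms hasnz_def by auto
  show "jz L x < L" "x (jz L x) \<noteq> 0" unfolding jz_def using LeastI[of "\<lambda>j. j < L \<and> x j \<noteq> 0" j] j by auto
  fix i assume "i < jz L x"
  moreover have "jz L x < L" unfolding jz_def using LeastI[of "\<lambda>j. j < L \<and> x j \<noteq> 0" j] j by auto
  ultimately show "x i = 0" unfolding jz_def using not_less_Least[of i "\<lambda>j. j < L \<and> x j \<noteq> 0"]
    by auto
qed

lemma oinv_step: assumes "oinv L r st" shows "oinv L r (ostep L st)"
proof -
  obtain sw x y ov where st: "st = (sw, x, y, ov)" by (cases st) auto
  have xr: "\<And>j. j < L \<Longrightarrow> x j + y j = r j - 1" using assms st by (auto simp: oinv_def)
  show ?thesis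
  proof (cases "hasnz L x")
    case False then show ?thesis using assms st by (simp add: ostep_def oinv_def)
  next
    case True
    note jp = jz_props[OF True]
    have h: "x (jz L x) + y (jz L x) = r (jz L x) - 1" "x (jz L x) \<noteq> 0" using xr[OF jp(1)] jp(2) by auto
    show ?thesis unfolding st oinv_def
    proof (intro allI impI)
      fix j assume j: "j < L"
      consider "j < jz L x" | "j = jz L x" | "jz L x < j" by arith
      then show "fst (snd (ostep L (sw, x, y, ov))) j + fst (snd (snd (ostep L (sw, x, y, ov)))) j = r j - 1"
      proof cases
        case 1 then show ?thesis using xr[OF j] True by (simp add: ostep_def add.commute)
      next
        case 2 then show ?thesis using h True by (simp add: ostep_def)
      next
        case 3 then show ?thesis using xr[OF j] True by (simp add: ostep_def)
      qed
    qed
  qed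
qed

lemma aux_md: "(b::nat) \<le> a \<Longrightarrow> (a - b) * P + b * P = a * P"
  by (metis add_mult_distrib le_add_diff_inverse2)

lemma oval_step:
  assumes inv: "oinv L r (sw, x, y, ov)" and r: "\<forall>j<L. 1 \<le> r j" and h: "hasnz L x"
  shows "oval L r (fst (snd (ostep L (sw, x, y, ov)))) = oval L r x + 1"
proof -
  define J where "J = jz L x"
  note jp = jz_props[OF h, folded J_def]
  define x' where "x' = (\<lambda>j. if j < J then y j else if j = J then x j - 1 else x j)"
  have xs: "fst (snd (ostep L (sw, x, y, ov))) = x'" unfolding ostep_def x'_def J_def using h by simp
  have xr: "\<And>j. j < L \<Longrightarrow> x j + y j = r j - 1" using inv by (auto simp: oinv_def)
  let ?T = "\<lambda>x j. (r j - 1 - x j) * pr r j"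
  have split: "\<And>x. oval L r x = (\<Sum>j\<in>{0..<J}. ?T x j) + ?T x J + (\<Sum>j\<in>{Suc J..<L}. ?T x j)"
  proof -
    fix x :: "nat \<Rightarrow> nat"
    have "oval L r x = (\<Sum>j\<in>{0..<J}. ?T x j) + (\<Sum>j\<in>{J..<L}. ?T x j)"
      unfolding oval_def using jp(1) by (subst sum.atLeastLessThan_concat) auto
    also have "(\<Sum>j\<in>{J..<L}. ?T x j) = ?T x J + (\<Sum>j\<in>{Suc J..<L}. ?T x j)"
      using jp(1) by (subst sum.atLeast_Suc_lessThan) auto
    finally show "oval L r x = (\<Sum>j\<in>{0..<J}. ?T x j) + ?T x J + (\<Sum>j\<in>{Suc J..<L}. ?T x j)" by simp
  qed
  have a1: "(\<Sum>j\<in>{0..<J}. ?T x' j) = 0"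
  proof (intro sum.neutral ballI)
    fix j assume "j \<in> {0..<J}"
    then have "j < J" "j < L" using jp(1) by auto
    then have "y j = r j - 1" using xr[of j] jp(3)[of j] by auto
    then show "?T x' j = 0" using \<open>j < J\<close> by (simp add: x'_def)
  qed
  have a2: "(\<Sum>j\<in>{0..<J}. ?T x j) = pr r J - 1"
  proof -
    have "(\<Sum>j\<in>{0..<J}. ?T x j) = (\<Sum>j\<in>{0..<J}. (r j - 1) * pr r j)"
      using jp(3) by (intro sum.cong) auto
    also have "\<dots> = pr r J - 1" using tele[of J r] r jp(1) by auto
    finally show ?thesis .
  qed
  have a3: "(\<Sum>j\<in>{Suc J..<L}. ?T x' j) = (\<Sum>j\<in>{Suc J..<L}. ?T x j)"
    by (intro sum.cong) (auto simp: x'_def)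
  have xJ: "1 \<le> x J" "x J \<le> r J - 1" using jp(2) xr[OF jp(1)] by auto
  have a4: "?T x' J = ?T x J + pr r J"
  proof -
    have "r J - 1 - x' J = (r J - 1 - x J) + 1" using xJ by (simp add: x'_def)
    then show ?thesis by (simp add: algebra_simps)
  qed
  have pp: "1 \<le> pr r J" using pr_pos r jp(1) by auto
  show ?thesis unfolding xs split[of x'] split[of x] a1 a2 a3 a4 using pp by simp
qed

lemma oval_bound: assumes "oinv L r (sw, x, y, ov)" "\<forall>j<L. 1 \<le> r j"
  shows "oval L r x + (\<Sum>j\<in>{0..<L}. x j * pr r j) = pr r L - 1"
proof -
  have "oval L r x + (\<Sum>j\<in>{0..<L}. x j * pr r j) = (\<Sum>j\<in>{0..<L}. (r j - 1) * pr r j)"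
    unfolding oval_def sum.distrib[symmetric]
  proof (intro sum.cong refl)
    fix j assume "j \<in> {0..<L}"
    then have "x j \<le> r j - 1" using assms(1) by (auto simp: oinv_def)
    then show "(r j - 1 - x j) * pr r j + x j * pr r j = (r j - 1) * pr r j" by (rule aux_md)
  qed
  also have "\<dots> = pr r L - 1" using tele assms(2) by auto
  finally show ?thesis .
qed

lemma oval_full: assumes "oinv L r (sw, x, y, ov)" "\<forall>j<L. 1 \<le> r j"
  shows "\<not> hasnz L x \<longleftrightarrow> oval L r x = pr r L - 1"
proof -
  have "(\<Sum>j\<in>{0..<L}. x j * pr r j) = 0 \<longleftrightarrow> (\<forall>j<L. x j = 0)"
  proof -
    have "\<And>j. j < L \<Longrightarrow> 1 \<le> pr r j" using assms(2) by (intro pr_pos) auto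
    note pos = this
    have "(\<Sum>j\<in>{0..<L}. x j * pr r j) = 0 \<longleftrightarrow> (\<forall>j\<in>{0..<L}. x j * pr r j = 0)" by (simp add: sum_eq_0_iff)
    also have "\<dots> \<longleftrightarrow> (\<forall>j<L. x j = 0)"
    proof
      assume H: "\<forall>j\<in>{0..<L}. x j * pr r j = 0"
      show "\<forall>j<L. x j = 0"
      proof (intro allI impI)
        fix j assume "j < L"
        then have "x j * pr r j = 0" "1 \<le> pr r j" using H pos by auto
        then show "x j = 0" by simp
      qed
    qed auto
    finally show ?thesis .
  qed
  moreover have "\<not> hasnz L x \<longleftrightarrow> (\<forall>j<L. x j = 0)" by (auto simp: hasnz_def)
  moreover note oval_bound[OF assms]
  ultimately show ?thesis by (metis add.right_neutral add_left_imp_eq)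
qed

definition oiter :: "nat \<Rightarrow> (nat \<Rightarrow> nat) \<Rightarrow> nat \<Rightarrow> ost" where
  "oiter L r s = (ostep L ^^ s) (oinit r)"

abbreviation "oov st \<equiv> snd (snd (snd st))"
abbreviation "ox st \<equiv> fst (snd st)"

lemma oiter_Suc: "oiter L r (Suc s) = ostep L (oiter L r s)" by (simp add: oiter_def)

lemma oiter_inv: "oinv L r (oiter L r s)"
proof (induction s)
  case 0 then show ?case by (simp add: oiter_def oinit_def oinv_def)
next
  case (Suc s) then show ?case unfolding oiter_Suc by (rule oinv_step)
qed

lemma ov_sticky: "oov st \<Longrightarrow> oov (ostep L st)"
  by (auto simp: ostep_def Let_def)

lemma oiter_A: assumes r: "\<forall>j<L. 1 \<le> r j"
  shows "s < pr r L \<Longrightarrow> \<not> oov (oiter L r s) \<and> oval L r (ox (oiter L r s)) = s"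
proof (induction s)
  case 0 then show ?case by (simp add: oiter_def oinit_def oval_def)
next
  case (Suc s)
  obtain sw x y ov where st: "oiter L r s = (sw, x, y, ov)" by (cases "oiter L r s") auto
  from Suc have IH: "\<not> ov" "oval L r x = s" using st by auto
  have inv: "oinv L r (sw, x, y, ov)" using oiter_inv[of L r s] st by simp
  have h: "hasnz L x" using oval_full[OF inv r] IH Suc.prems by auto
  have nx: "oiter L r (Suc s) = ostep L (sw, x, y, ov)" using st by (simp add: oiter_def)
  show ?case using oval_step[OF inv r h] h IH unfolding nx by (simp add: ostep_def)
qed

lemma oiter_B: assumes r: "\<forall>j<L. 1 \<le> r j"
  shows "pr r L \<le> s \<Longrightarrow> oov (oiter L r s)"
proof (induction s)
  case 0 then show ?case using pr_pos[OF r] by simp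
next
  case (Suc s)
  show ?case
  proof (cases "pr r L \<le> s")
    case True then show ?thesis using Suc ov_sticky by (simp add: oiter_def)
  next
    case False
    then have s: "s = pr r L - 1" "s < pr r L" using Suc.prems by auto
    obtain sw x y ov where st: "oiter L r s = (sw, x, y, ov)" by (cases "oiter L r s") auto
    have inv: "oinv L r (sw, x, y, ov)" using oiter_inv[of L r s] st by simp
    have "oval L r x = pr r L - 1" using oiter_A[OF r s(2)] st s by simp
    then have h: "\<not> hasnz L x" using oval_full[OF inv r] by simp
    have nx: "oiter L r (Suc s) = ostep L (sw, x, y, ov)" using st by (simp add: oiter_def)
    show ?thesis unfolding nx using h by (simp add: ostep_def)
  qed
qed

lemma oiter_main: assumes r: "\<forall>j<L. 1 \<le> r j"
  shows "(\<not> oov (oiter L r s) \<and> \<not> hasnz L (ox (oiter L r s))) \<longleftrightarrow> s = pr r L - 1"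
proof (cases "s < pr r L")
  case True
  obtain sw x y ov where st: "oiter L r s = (sw, x, y, ov)" by (cases "oiter L r s") auto
  have inv: "oinv L r (sw, x, y, ov)" using oiter_inv[of L r s] st by simp
  show ?thesis using oiter_A[OF r True] oval_full[OF inv r] st by auto
next
  case False then show ?thesis using oiter_B[OF r] pr_pos[OF r] by auto
qed

section \<open>Regular structure\<close>

definition rank :: "nat \<Rightarrow> sym \<Rightarrow> sym \<Rightarrow> nat option" where
  "rank n d a = (case a of B m \<Rightarrow> if 1 \<le> m \<and> m \<le> n then Some m else None
     | C m \<Rightarrow> if 1 \<le> m \<and> m \<le> n then Some (n + m) else None
     | Cent \<Rightarrow> Some (2 * n + 2)
     | _ \<Rightarrow> if a = d then Some (2 * n + 1) else None)"

definition letter :: "nat \<Rightarrow> sym \<Rightarrow> nat \<Rightarrow> sym" where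
  "letter n d k = (if 1 \<le> k \<and> k \<le> n then B k else if k \<le> 2 * n then C (k - n)
     else if k = 2 * n + 1 then d else Cent)"

definition rstep :: "nat \<Rightarrow> sym \<Rightarrow> nat option \<Rightarrow> sym \<Rightarrow> nat option" where
  "rstep n d rs a = (case rs of None \<Rightarrow> None | Some r \<Rightarrow>
     (case rank n d a of None \<Rightarrow> None | Some k \<Rightarrow> if r \<le> k \<and> r < 2 * n + 2 then Some k else None))"

definition blk :: "nat \<Rightarrow> sym \<Rightarrow> nat \<Rightarrow> nat \<Rightarrow> (nat \<Rightarrow> nat) \<Rightarrow> sym list" where
  "blk n d lo hi cnt = concat (map (\<lambda>k. replicate (cnt k) (letter n d k)) [lo..<hi])"

definition Wd :: "nat \<Rightarrow> sym \<Rightarrow> (nat \<Rightarrow> nat) \<Rightarrow> (nat \<Rightarrow> nat) \<Rightarrow> nat \<Rightarrow> sym list" where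
  "Wd n d \<alpha> \<gamma> \<delta> = blocks n B \<alpha> @ blocks n C \<gamma> @ replicate \<delta> d @ [Cent]"

lemma rank_letter: assumes "d \<in> {D1, D2}" "1 \<le> k" "k \<le> 2 * n + 2"
  shows "rank n d (letter n d k) = Some k"
  using assms by (auto simp: rank_def letter_def)

lemma rank_inv: assumes "d \<in> {D1, D2}" "rank n d a = Some k"
  shows "a = letter n d k \<and> 1 \<le> k \<and> k \<le> 2 * n + 2"
  using assms by (cases a) (auto simp: rank_def letter_def split: if_splits)

lemma rstep_None[simp]: "foldl (rstep n d) None u = None"
  by (induction u) (auto simp: rstep_def)

lemma rstep_top: "u \<noteq> [] \<Longrightarrow> foldl (rstep n d) (Some (2 * n + 2)) u = None"
  by (cases u) (auto simp: rstep_def split: option.splits)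

lemma blk_empty: "hi \<le> lo \<Longrightarrow> blk n d lo hi cnt = []" by (simp add: blk_def)

lemma blk_Suc: "lo \<le> hi \<Longrightarrow> blk n d lo (Suc hi) cnt = blk n d lo hi cnt @ replicate (cnt hi) (letter n d hi)"
  by (simp add: blk_def)

lemma blk_cons: "lo < hi \<Longrightarrow> blk n d lo hi cnt = replicate (cnt lo) (letter n d lo) @ blk n d (Suc lo) hi cnt"
  by (simp add: blk_def upt_conv_Cons)

lemma blk_skip: "lo \<le> lo' \<Longrightarrow> lo' \<le> hi \<Longrightarrow> (\<forall>k. lo \<le> k \<and> k < lo' \<longrightarrow> cnt k = 0) \<Longrightarrow>
   blk n d lo hi cnt = blk n d lo' hi cnt"
proof (induction "lo' - lo" arbitrary: lo)
  case 0 then show ?case by simp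
next
  case (Suc x)
  then have "lo < hi" by auto
  then show ?case using Suc by (subst blk_cons) (auto)
qed

lemma rep_run: assumes "d \<in> {D1, D2}" "1 \<le> k" "k < 2 * n + 2" "r \<le> k"
  shows "foldl (rstep n d) (Some r) (replicate c (letter n d k)) = Some (if c = 0 then r else k)"
  using assms
proof (induction c arbitrary: r)
  case 0 then show ?case by simp
next
  case (Suc c)
  have "rstep n d (Some r) (letter n d k) = Some k"
    using Suc.prems rank_letter[of d k n] by (simp add: rstep_def)
  then show ?case using Suc.IH[of k] Suc.prems by simp
qed

lemma blk_run: assumes d: "d \<in> {D1, D2}" and "1 \<le> lo" "lo \<le> hi" "hi \<le> 2 * n + 2" "r \<le> lo"
  shows "\<exists>r'. foldl (rstep n d) (Some r) (blk n d lo hi cnt) = Some r' \<and> (r' < hi \<or> r' = r)"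
  using assms(2-)
proof (induction hi)
  case 0 then show ?case by auto
next
  case (Suc hi)
  show ?case
  proof (cases "lo = Suc hi")
    case True then show ?thesis using Suc by (simp add: blk_empty)
  next
    case False
    then have h: "lo \<le> hi" using Suc by auto
    obtain r' where r': "foldl (rstep n d) (Some r) (blk n d lo hi cnt) = Some r'" "r' < hi \<or> r' = r"
      using Suc h by auto
    have "r' \<le> hi" using r' Suc h by auto
    then show ?thesis unfolding blk_Suc[OF h] using r' rep_run[OF d, of hi n r' "cnt hi"] Suc h by auto
  qed
qed

lemma R_char: assumes d: "d \<in> {D1, D2}"
  shows "r < 2 * n + 2 \<Longrightarrow> foldl (rstep n d) (Some r) u = Some (2 * n + 2) \<longleftrightarrow>
     (\<exists>cnt. (\<forall>k<r. cnt k = 0) \<and> u = blk n d 1 (2 * n + 2) cnt @ [Cent])"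
proof (induction u arbitrary: r)
  case Nil
  then show ?case by auto
next
  case (Cons a u)
  show ?case
  proof
    assume H: "foldl (rstep n d) (Some r) (a # u) = Some (2 * n + 2)"
    then obtain k where ra: "rank n d a = Some k" and rk: "r \<le> k" and ru: "foldl (rstep n d) (Some k) u = Some (2 * n + 2)"
      using Cons.prems by (auto simp: rstep_def split: option.splits if_splits)
    from rank_inv[OF d ra] have a: "a = letter n d k" "1 \<le> k" "k \<le> 2 * n + 2" by auto
    show "\<exists>cnt. (\<forall>k<r. cnt k = 0) \<and> a # u = blk n d 1 (2 * n + 2) cnt @ [Cent]"
    proof (cases "k = 2 * n + 2")
      case True
      then have "u = []" using ru rstep_top[of u n d] by (cases u) auto
      then show ?thesis using True a by (intro exI[of _ "\<lambda>_. 0"]) (auto simp: blk_def letter_def)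
    next
      case False
      then have kl: "k < 2 * n + 2" using a by auto
      obtain cnt where c: "\<forall>j<k. cnt j = 0" "u = blk n d 1 (2 * n + 2) cnt @ [Cent]"
        using Cons.IH[OF kl] ru by auto
      define cnt' where "cnt' = cnt(k := Suc (cnt k))"
      have "blk n d 1 (2 * n + 2) cnt = blk n d k (2 * n + 2) cnt"
        using c(1) a kl by (intro blk_skip) auto
      also have "\<dots> = replicate (cnt k) (letter n d k) @ blk n d (Suc k) (2 * n + 2) cnt"
        using kl by (rule blk_cons)
      finally have e1: "blk n d 1 (2 * n + 2) cnt = replicate (cnt k) (letter n d k) @ blk n d (Suc k) (2 * n + 2) cnt" .
      have "blk n d 1 (2 * n + 2) cnt' = blk n d k (2 * n + 2) cnt'"
        using c(1) a kl by (intro blk_skip) (auto simp: cnt'_def)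
      also have "\<dots> = replicate (cnt' k) (letter n d k) @ blk n d (Suc k) (2 * n + 2) cnt'"
        using kl by (rule blk_cons)
      also have "blk n d (Suc k) (2 * n + 2) cnt' = blk n d (Suc k) (2 * n + 2) cnt"
        by (auto simp: blk_def cnt'_def intro!: arg_cong[where f=concat] map_cong)
      finally have e2': "blk n d 1 (2 * n + 2) cnt' = replicate (cnt' k) (letter n d k) @ blk n d (Suc k) (2 * n + 2) cnt" .
      have ck: "cnt' k = Suc (cnt k)" by (simp add: cnt'_def)
      have e2: "blk n d 1 (2 * n + 2) cnt' = letter n d k # replicate (cnt k) (letter n d k) @ blk n d (Suc k) (2 * n + 2) cnt"
        using e2' unfolding ck by simp
      show ?thesis using e1 e2 c rk a(1) by (intro exI[of _ cnt']) (auto simp: cnt'_def)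
    qed
  next
    assume "\<exists>cnt. (\<forall>k<r. cnt k = 0) \<and> a # u = blk n d 1 (2 * n + 2) cnt @ [Cent]"
    then obtain cnt where c: "\<forall>k<r. cnt k = 0" "a # u = blk n d 1 (2 * n + 2) cnt @ [Cent]" by auto
    define lo where "lo = max 1 r"
    have "blk n d 1 (2 * n + 2) cnt = blk n d lo (2 * n + 2) cnt"
      using c(1) Cons.prems by (intro blk_skip) (auto simp: lo_def)
    then have e: "a # u = blk n d lo (2 * n + 2) cnt @ [Cent]" using c(2) by simp
    obtain r' where r': "foldl (rstep n d) (Some r) (blk n d lo (2 * n + 2) cnt) = Some r'" "r' < 2 * n + 2 \<or> r' = r"
      using blk_run[OF d, of lo "2 * n + 2" n r cnt] Cons.prems by (auto simp: lo_def)
    have "foldl (rstep n d) (Some r) (a # u) = rstep n d (Some r') Cent" unfolding e using r'(1) by simp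
    also have "\<dots> = Some (2 * n + 2)" using r'(2) Cons.prems by (auto simp: rstep_def rank_def)
    finally show "foldl (rstep n d) (Some r) (a # u) = Some (2 * n + 2)" .
  qed
qed

lemma blk_app: "lo \<le> mid \<Longrightarrow> mid \<le> hi \<Longrightarrow> blk n d lo hi cnt = blk n d lo mid cnt @ blk n d mid hi cnt"
proof -
  assume a: "lo \<le> mid" "mid \<le> hi"
  then have "[lo..<hi] = [lo..<mid] @ [mid..<hi]" using upt_add_eq_append[of lo mid "hi - mid"] by simp
  then show ?thesis unfolding blk_def by simp
qed

lemma map_shift_upt: "map (\<lambda>i. i + n) [a..<b] = [a + n..<b + n]"
  by (induction b) auto

lemma blocks_cong: "(\<And>m. 1 \<le> m \<Longrightarrow> m \<le> n \<Longrightarrow> f m = g m) \<Longrightarrow> blocks n x f = blocks n x g"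
  unfolding blocks_def by (intro arg_cong[where f=concat] map_cong) auto

lemma blk_W: "blk n d 1 (2 * n + 2) cnt @ [Cent] = Wd n d cnt (\<lambda>m. cnt (n + m)) (cnt (2 * n + 1))"
proof -
  have s: "blk n d 1 (2 * n + 2) cnt = blk n d 1 (n + 1) cnt @ blk n d (n + 1) (2 * n + 1) cnt @ blk n d (2 * n + 1) (2 * n + 2) cnt"
    using blk_app[of 1 "n+1" "2*n+2" n d cnt] blk_app[of "n+1" "2*n+1" "2*n+2" n d cnt] by simp
  have b: "blk n d 1 (n + 1) cnt = blocks n B cnt"
    unfolding blk_def blocks_def by (rule arg_cong[where f=concat], rule map_cong) (auto simp: letter_def)
  have "blk n d (n + 1) (2 * n + 1) cnt = concat (map (\<lambda>k. replicate (cnt k) (letter n d k)) (map (\<lambda>i. i + n) [1..<n+1]))"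
    unfolding blk_def map_shift_upt by (simp add: mult_2)
  also have "\<dots> = blocks n C (\<lambda>m. cnt (n + m))"
    unfolding blocks_def map_map o_def by (rule arg_cong[where f=concat], rule map_cong) (auto simp: letter_def add.commute)
  finally have c: "blk n d (n + 1) (2 * n + 1) cnt = blocks n C (\<lambda>m. cnt (n + m))" .
  have e: "blk n d (2 * n + 1) (2 * n + 2) cnt = replicate (cnt (2 * n + 1)) d"
    by (simp add: blk_def letter_def)
  show ?thesis unfolding s b c e Wd_def by simp
qed

lemma R_W: assumes d: "d \<in> {D1, D2}"
  shows "foldl (rstep n d) (Some 0) u = Some (2 * n + 2) \<longleftrightarrow> (\<exists>\<alpha> \<gamma> \<delta>. u = Wd n d \<alpha> \<gamma> \<delta>)"
proof
  assume "foldl (rstep n d) (Some 0) u = Some (2 * n + 2)"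
  then obtain cnt where "u = blk n d 1 (2 * n + 2) cnt @ [Cent]" using R_char[OF d, of 0 n u] by auto
  then show "\<exists>\<alpha> \<gamma> \<delta>. u = Wd n d \<alpha> \<gamma> \<delta>" using blk_W by metis
next
  assume "\<exists>\<alpha> \<gamma> \<delta>. u = Wd n d \<alpha> \<gamma> \<delta>"
  then obtain \<alpha> \<gamma> \<delta> where u: "u = Wd n d \<alpha> \<gamma> \<delta>" by auto
  define cnt where "cnt = (\<lambda>k. if 1 \<le> k \<and> k \<le> n then \<alpha> k else if n < k \<and> k \<le> 2 * n then \<gamma> (k - n) else if k = 2 * n + 1 then \<delta> else 0)"
  have "u = Wd n d cnt (\<lambda>m. cnt (n + m)) (cnt (2 * n + 1))"
  proof -
    have "blocks n B \<alpha> = blocks n B cnt" by (rule blocks_cong) (auto simp: cnt_def)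
    moreover have "blocks n C \<gamma> = blocks n C (\<lambda>m. cnt (n + m))" by (rule blocks_cong) (auto simp: cnt_def)
    ultimately show ?thesis unfolding u Wd_def by (simp add: cnt_def)
  qed
  then have "u = blk n d 1 (2 * n + 2) cnt @ [Cent]" using blk_W by metis
  then show "foldl (rstep n d) (Some 0) u = Some (2 * n + 2)" using R_char[OF d, of 0 n u] by auto
qed



datatype fkey = FInit | FLd nat | FSw nat nat | FSt nat | FOv nat | FVer

definition srcs :: "nat \<Rightarrow> (nat \<Rightarrow> nat) \<Rightarrow> nat \<Rightarrow> nat list" where
  "srcs n e h = (if h = 0 then concat (map (\<lambda>m. replicate (e m) m) [1..<Suc n]) @ replicate n 0
                else replicate (e h) h)"

abbreviation "Ln n e h \<equiv> length (srcs n e h)"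
abbreviation "src n e h j \<equiv> srcs n e h ! j"

definition act :: "nat \<Rightarrow> sym \<Rightarrow> sym \<Rightarrow> nat option" where
  "act n d a = (case a of C m \<Rightarrow> if 1 \<le> m \<and> m \<le> n then Some m else None
     | Cent \<Rightarrow> None | B _ \<Rightarrow> None | _ \<Rightarrow> if a = d then Some 0 else None)"

definition rad :: "(nat \<Rightarrow> nat) \<Rightarrow> nat \<Rightarrow> nat" where "rad \<beta> s = (if s = 0 then 2 else \<beta> s)"

type_synonym key = "nat \<times> nat \<times> bool"

definition KK :: "nat \<Rightarrow> (nat \<Rightarrow> nat) \<Rightarrow> key set" where
  "KK n e = {(h, j, b). h \<le> n \<and> j < Ln n e h}"

definition msK :: "nat \<Rightarrow> (nat \<Rightarrow> nat) \<Rightarrow> sym \<Rightarrow> (fkey \<Rightarrow> bool) \<Rightarrow> sym \<Rightarrow> (key \<Rightarrow> bool) \<Rightarrow> (fkey \<Rightarrow> bool) \<times> (key \<Rightarrow> int)" where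
  "msK n e d f a z = (let
     zD = (\<lambda>h j. z (h, j, f (FSw h j)));
     hz = (\<lambda>h. \<exists>j < Ln n e h. \<not> zD h j);
     j0 = (\<lambda>h. LEAST j. j < Ln n e h \<and> \<not> zD h j);
     stepo = (\<lambda>h. act n d a = Some h \<and> f (FSt h));
     zr = (\<lambda>h. \<exists>j<Ln n e h. src n e h j \<noteq> 0 \<and> \<not> f (FLd (src n e h j)));
     okv = (\<lambda>h. if zr h then \<not> f (FSt h) else f (FSt h) \<and> \<not> f (FOv h) \<and> (\<forall>j<Ln n e h. zD h j))
   in (\<lambda>k. case k of FInit \<Rightarrow> True
       | FLd m \<Rightarrow> f (FLd m) \<or> (a = B m \<and> 1 \<le> m \<and> m \<le> n)
       | FSw h j \<Rightarrow> (if stepo h \<and> hz h \<and> j < j0 h then \<not> f (FSw h j) else f (FSw h j))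
       | FSt h \<Rightarrow> f (FSt h) \<or> act n d a = Some h
       | FOv h \<Rightarrow> f (FOv h) \<or> (stepo h \<and> \<not> hz h)
       | FVer \<Rightarrow> (if a = Cent then (\<forall>h \<le> n. okv h) else f FVer),
     \<lambda>(h, j, b). (if \<not> f FInit \<and> src n e h j = 0 \<and> b = f (FSw h j) then 1 else 0)
       + (if (\<exists>m. a = B m \<and> 1 \<le> m \<and> m \<le> n \<and> f (FLd m) \<and> src n e h j = m) \<and> b = f (FSw h j) then 1 else 0)
       + (if stepo h \<and> hz h \<and> j = j0 h then (if b = f (FSw h j) then -1 else 1) else 0)))"

definition osr :: "nat \<Rightarrow> (nat \<Rightarrow> nat) \<Rightarrow> (nat \<Rightarrow> nat) \<Rightarrow> nat \<Rightarrow> nat \<Rightarrow> nat" where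
  "osr n e \<beta> h j = rad \<beta> (src n e h j)"

definition ostt where "ostt n e \<beta> h s = oiter (Ln n e h) (osr n e \<beta> h) s"

definition D0 where "D0 n e \<iota> \<beta> h j = (if src n e h j = 0 then (if \<iota> then 1 else 0) else \<beta> (src n e h j) - 1)"

definition OSt :: "nat \<Rightarrow> (nat \<Rightarrow> nat) \<Rightarrow> bool \<Rightarrow> (nat \<Rightarrow> nat) \<Rightarrow> (nat \<Rightarrow> nat) \<Rightarrow> (fkey \<Rightarrow> bool) \<times> (key \<Rightarrow> nat)" where
  "OSt n e \<iota> \<beta> k = ((\<lambda>fk. case fk of FInit \<Rightarrow> \<iota>
       | FLd m \<Rightarrow> 1 \<le> m \<and> m \<le> n \<and> 0 < \<beta> m
       | FSw h j \<Rightarrow> h \<le> n \<and> j < Ln n e h \<and> 0 < k h \<and> fst (ostt n e \<beta> h (k h - 1)) j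
       | FSt h \<Rightarrow> h \<le> n \<and> 0 < k h
       | FOv h \<Rightarrow> h \<le> n \<and> 0 < k h \<and> oov (ostt n e \<beta> h (k h - 1))
       | FVer \<Rightarrow> False),
     \<lambda>(h, j, b). if h \<le> n \<and> j < Ln n e h then
        (if k h = 0 then (if b then 0 else D0 n e \<iota> \<beta> h j)
         else (if b = fst (ostt n e \<beta> h (k h - 1)) j then ox (ostt n e \<beta> h (k h - 1)) j
               else fst (snd (snd (ostt n e \<beta> h (k h - 1)))) j))
        else 0)"

lemma src_range: assumes "h \<le> n" "j < Ln n e h"
  shows "src n e h j = 0 \<or> (1 \<le> src n e h j \<and> src n e h j \<le> n)"
proof (cases "h = 0")
  case True
  have "src n e h j \<in> set (srcs n e h)" using assms(2) by simp
  then show ?thesis using True by (auto simp: srcs_def)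
next
  case False then show ?thesis using assms by (auto simp: srcs_def)
qed

lemma cstep_pair: "cstep K ms (f, v) a = (fst (ms f a (\<lambda>k. v k = 0)), \<lambda>k. if k \<in> K then nat (int (v k) + sg (snd (ms f a (\<lambda>k. v k = 0)) k)) else 0)"
  by (simp add: cstep_def Let_def)

lemma sg_id: "x \<in> {-1, 0, 1} \<Longrightarrow> sg x = x" by (auto simp: sg_def)

lemma T1: assumes m: "1 \<le> m" "m \<le> n"
  shows "cstep (KK n e) (msK n e d) (OSt n e \<iota> \<beta> (\<lambda>_. 0)) (B m) = OSt n e True (\<beta>(m := \<beta> m + 1)) (\<lambda>_. 0)"
proof -
  obtain f v where fv: "OSt n e \<iota> \<beta> (\<lambda>_. 0) = (f, v)" by fastforce
  have f: "f = fst (OSt n e \<iota> \<beta> (\<lambda>_. 0))" and v: "v = snd (OSt n e \<iota> \<beta> (\<lambda>_. 0))" using fv by auto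
  have act: "act n d (B m) = None" by (simp add: act_def)
  have F: "fst (msK n e d f (B m) z) = fst (OSt n e True (\<beta>(m := \<beta> m + 1)) (\<lambda>_. 0))" for z
    unfolding msK_def Let_def act f OSt_def
    using m by (auto split: fkey.splits)
  have V: "(\<lambda>k. if k \<in> KK n e then nat (int (v k) + sg (snd (msK n e d f (B m) z) k)) else 0)
       = snd (OSt n e True (\<beta>(m := \<beta> m + 1)) (\<lambda>_. 0))" for z
  proof
    fix k :: key
    obtain h j b where k: "k = (h, j, b)" by (cases k) auto
    show "(if k \<in> KK n e then nat (int (v k) + sg (snd (msK n e d f (B m) z) k)) else 0)
       = snd (OSt n e True (\<beta>(m := \<beta> m + 1)) (\<lambda>_. 0)) k"
    proof (cases "h \<le> n \<and> j < Ln n e h")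
      case False then show ?thesis by (auto simp: k KK_def OSt_def)
    next
      case True
      note sr = src_range[of h n j e] True
      show ?thesis using True sr m
        unfolding k KK_def v f OSt_def msK_def Let_def act
        by (auto simp: sg_def D0_def)
    qed
  qed
  show ?thesis unfolding fv cstep_pair F V by simp
qed

lemma msK_snd: "snd (msK n e d f a z) (h, j, b) =
   (if \<not> f FInit \<and> src n e h j = 0 \<and> b = f (FSw h j) then 1 else 0)
   + (if (\<exists>m. a = B m \<and> 1 \<le> m \<and> m \<le> n \<and> f (FLd m) \<and> src n e h j = m) \<and> b = f (FSw h j) then 1 else 0)
   + (if act n d a = Some h \<and> f (FSt h) \<and> (\<exists>j<Ln n e h. \<not> z (h, j, f (FSw h j)))
         \<and> j = (LEAST j. j < Ln n e h \<and> \<not> z (h, j, f (FSw h j))) then (if b = f (FSw h j) then -1 else 1) else 0)"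
  by (simp add: msK_def Let_def)

lemma msK_fst: "fst (msK n e d f a z) = (\<lambda>k. case k of FInit \<Rightarrow> True
       | FLd m \<Rightarrow> f (FLd m) \<or> (a = B m \<and> 1 \<le> m \<and> m \<le> n)
       | FSw h j \<Rightarrow> (if (act n d a = Some h \<and> f (FSt h)) \<and> (\<exists>j<Ln n e h. \<not> z (h, j, f (FSw h j)))
             \<and> j < (LEAST j. j < Ln n e h \<and> \<not> z (h, j, f (FSw h j))) then \<not> f (FSw h j) else f (FSw h j))
       | FSt h \<Rightarrow> f (FSt h) \<or> act n d a = Some h
       | FOv h \<Rightarrow> f (FOv h) \<or> ((act n d a = Some h \<and> f (FSt h)) \<and> \<not> (\<exists>j<Ln n e h. \<not> z (h, j, f (FSw h j))))
       | FVer \<Rightarrow> (if a = Cent then (\<forall>h \<le> n. (if (\<exists>j<Ln n e h. src n e h j \<noteq> 0 \<and> \<not> f (FLd (src n e h j)))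
            then \<not> f (FSt h) else f (FSt h) \<and> \<not> f (FOv h) \<and> (\<forall>j<Ln n e h. z (h, j, f (FSw h j))))) else f FVer))"
  by (simp add: msK_def Let_def)

lemma act_not_B: "act n d a = Some h \<Longrightarrow> a \<noteq> Cent \<and> (\<forall>m. a \<noteq> B m) \<and> h \<le> n"
  by (cases a) (auto simp: act_def split: if_splits)

lemma T2: assumes ac: "act n d a = Some h0" and cond: "\<forall>h. 0 < k h \<longrightarrow> \<iota>"
  shows "cstep (KK n e) (msK n e d) (OSt n e \<iota> \<beta> k) a = OSt n e True \<beta> (k(h0 := Suc (k h0)))"
proof -
  define f where "f = fst (OSt n e \<iota> \<beta> k)"
  define v where "v = snd (OSt n e \<iota> \<beta> k)"
  define z where "z = (\<lambda>kk. v kk = 0)"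
  define k' where "k' = k(h0 := Suc (k h0))"
  have fv: "OSt n e \<iota> \<beta> k = (f, v)" by (simp add: f_def v_def)
  have an: "a \<noteq> Cent" "\<And>m. a \<noteq> B m" "h0 \<le> n" using act_not_B[OF ac] by auto
  have fS: "f (FSw h j) = (h \<le> n \<and> j < Ln n e h \<and> 0 < k h \<and> fst (ostt n e \<beta> h (k h - 1)) j)" for h j
    by (simp add: f_def OSt_def)
  have fSt: "f (FSt h) = (h \<le> n \<and> 0 < k h)" for h by (simp add: f_def OSt_def)
  have fOv: "f (FOv h) = (h \<le> n \<and> 0 < k h \<and> oov (ostt n e \<beta> h (k h - 1)))" for h by (simp add: f_def OSt_def)
  obtain sw x y ov where st: "ostt n e \<beta> h0 (k h0 - 1) = (sw, x, y, ov)" by (cases "ostt n e \<beta> h0 (k h0 - 1)") auto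
  let ?L = "Ln n e h0"
  have vk: "\<And>j b. j < ?L \<Longrightarrow> 0 < k h0 \<Longrightarrow> v (h0, j, b) = (if b = sw j then x j else y j)"
    using an(3) st by (simp add: v_def OSt_def)
  have zk: "\<And>j. j < ?L \<Longrightarrow> 0 < k h0 \<Longrightarrow> z (h0, j, f (FSw h0 j)) = (x j = 0)"
    using vk fS an(3) st by (simp add: z_def)
  have hz: "0 < k h0 \<Longrightarrow> (\<exists>j<?L. \<not> z (h0, j, f (FSw h0 j))) = hasnz ?L x"
    using zk by (auto simp: hasnz_def)
  have j0: "0 < k h0 \<Longrightarrow> (LEAST j. j < ?L \<and> \<not> z (h0, j, f (FSw h0 j))) = jz ?L x"
    unfolding jz_def using zk by (intro arg_cong[where f=Least] ext) auto
  have nst: "0 < k h0 \<Longrightarrow> ostt n e \<beta> h0 (k' h0 - 1) = ostep ?L (sw, x, y, ov)"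
  proof -
    assume "0 < k h0"
    then have "k' h0 - 1 = Suc (k h0 - 1)" by (simp add: k'_def)
    then show ?thesis using st by (simp add: ostt_def oiter_Suc)
  qed
  have F: "fst (msK n e d f a z) = fst (OSt n e True \<beta> k')"
  proof
    fix fk show "fst (msK n e d f a z) fk = fst (OSt n e True \<beta> k') fk"
    proof (cases fk)
      case FInit then show ?thesis by (simp add: msK_fst OSt_def)
    next
      case (FLd m) then show ?thesis using an by (simp add: msK_fst OSt_def f_def)
    next
      case (FSt h) then show ?thesis using ac an by (auto simp: msK_fst OSt_def fSt k'_def)
    next
      case FVer then show ?thesis using an by (simp add: msK_fst OSt_def f_def)
    next
      case (FSw h j)
      show ?thesis
      proof (cases "h = h0 \<and> 0 < k h0")
        case False
        then have "\<not> (act n d a = Some h \<and> f (FSt h))" using ac fSt by auto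
        moreover have "h = h0 \<Longrightarrow> k h0 = 0" using False by auto
        ultimately show ?thesis using FSw ac
          by (auto simp: msK_fst OSt_def fS k'_def ostt_def oiter_def oinit_def)
      next
        case True
        then have s: "act n d a = Some h \<and> f (FSt h)" using ac fSt an by auto
        have jzL: "hasnz ?L x \<Longrightarrow> jz ?L x < ?L" using jz_props(1) by blast
        show ?thesis using FSw True s hz j0 nst an(3) st fS jzL
          by (auto simp: msK_fst OSt_def k'_def ostep_def Let_def)
      qed
    next
      case (FOv h)
      show ?thesis
      proof (cases "h = h0 \<and> 0 < k h0")
        case False
        then have "\<not> (act n d a = Some h \<and> f (FSt h))" using ac fSt by auto
        moreover have "h = h0 \<Longrightarrow> k h0 = 0" using False by auto
        ultimately show ?thesis using FOv ac
          by (auto simp: msK_fst OSt_def fOv k'_def ostt_def oiter_def oinit_def)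
      next
        case True
        then have s: "act n d a = Some h \<and> f (FSt h)" using ac fSt an by auto
        show ?thesis using FOv True s hz nst an(3) st fOv
          by (auto simp: msK_fst OSt_def k'_def ostep_def Let_def)
      qed
    qed
  qed
  have fI: "f FInit = \<iota>" by (simp add: f_def OSt_def)
  have V: "(\<lambda>kk. if kk \<in> KK n e then nat (int (v kk) + sg (snd (msK n e d f a z) kk)) else 0) = snd (OSt n e True \<beta> k')"
  proof
    fix kk :: key
    obtain h j b where kk: "kk = (h, j, b)" by (cases kk) auto
    show "(if kk \<in> KK n e then nat (int (v kk) + sg (snd (msK n e d f a z) kk)) else 0) = snd (OSt n e True \<beta> k') kk"
    proof (cases "h \<le> n \<and> j < Ln n e h")
      case False
      then have "kk \<notin> KK n e" "snd (OSt n e True \<beta> k') kk = 0" by (auto simp: kk KK_def OSt_def)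
      then show ?thesis by simp
    next
      case True
      then have inK: "kk \<in> KK n e" by (simp add: kk KK_def)
      show ?thesis
      proof (cases "h = h0 \<and> 0 < k h0")
        case hc: True
        then have io: "\<iota>" using cond by auto
        have s: "act n d a = Some h \<and> f (FSt h)" using ac fSt an hc by auto
        have jL: "j < ?L" using True hc by simp
        have fsj: "f (FSw h0 j) = sw j" using fS[of h0 j] an(3) jL hc st by simp
        have op: "snd (msK n e d f a z) kk = (if hasnz ?L x \<and> j = jz ?L x then (if b = sw j then -1 else 1) else 0)"
          unfolding kk msK_snd using hc s io fI an hz j0 fsj by auto
        have vv: "v kk = (if b = sw j then x j else y j)" using vk[OF jL] hc kk by simp
        have ex: "snd (OSt n e True \<beta> k') kk = (if b = fst (ostep ?L (sw, x, y, ov)) j then ox (ostep ?L (sw, x, y, ov)) j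
            else fst (snd (snd (ostep ?L (sw, x, y, ov)))) j)"
          using nst hc True by (simp add: kk OSt_def k'_def)
        have xz: "hasnz ?L x \<Longrightarrow> x (jz ?L x) \<noteq> 0" using jz_props(2) by blast
        show ?thesis unfolding ex using inK op vv xz
          by (auto simp: ostep_def sg_def)
      next
        case hc: False
        have ns: "\<not> (act n d a = Some h \<and> f (FSt h))" using hc ac fSt by auto
        have op: "snd (msK n e d f a z) kk = (if \<not> \<iota> \<and> src n e h j = 0 \<and> b = f (FSw h j) then 1 else 0)"
          unfolding kk msK_snd using ns fI an by auto
        show ?thesis
        proof (cases "k h = 0")
          case k0: True
          have fsj: "f (FSw h j) = False" using fS k0 by simp
          have vv: "v kk = (if b then 0 else D0 n e \<iota> \<beta> h j)" using True k0 by (simp add: kk v_def OSt_def)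
          show ?thesis
          proof (cases "h = h0")
            case False
            then have "snd (OSt n e True \<beta> k') kk = (if b then 0 else D0 n e True \<beta> h j)"
              using True k0 by (simp add: kk OSt_def k'_def)
            then show ?thesis using inK op vv fsj by (auto simp: D0_def sg_def)
          next
            case hh: True
            have "snd (OSt n e True \<beta> k') kk = (if b then 0 else rad \<beta> (src n e h j) - 1)"
              using True k0 hh by (simp add: kk OSt_def k'_def ostt_def oiter_def oinit_def osr_def)
            then show ?thesis using inK op vv fsj by (auto simp: D0_def sg_def rad_def)
          qed
        next
          case kp: False
          then have io: "\<iota>" and hne: "h \<noteq> h0" using cond hc by auto
          have "snd (OSt n e True \<beta> k') kk = v kk" using hne kp by (simp add: kk OSt_def k'_def v_def)
          then show ?thesis using inK op io by (simp add: sg_def)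
        qed
      qed
    qed
  qed
  show ?thesis unfolding fv cstep_pair z_def[symmetric] F V k'_def by simp
qed

lemma T3: assumes cond: "\<forall>h. 0 < k h \<longrightarrow> \<iota>"
  shows "fst (cstep (KK n e) (msK n e d) (OSt n e \<iota> \<beta> k) Cent) FVer \<longleftrightarrow>
     (\<forall>h\<le>n. k h = pr (osr n e \<beta> h) (Ln n e h))"
proof -
  define f where "f = fst (OSt n e \<iota> \<beta> k)"
  define v where "v = snd (OSt n e \<iota> \<beta> k)"
  define z where "z = (\<lambda>kk. v kk = 0)"
  have fv: "OSt n e \<iota> \<beta> k = (f, v)" by (simp add: f_def v_def)
  have fS: "f (FSw h j) = (h \<le> n \<and> j < Ln n e h \<and> 0 < k h \<and> fst (ostt n e \<beta> h (k h - 1)) j)" for h j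
    by (simp add: f_def OSt_def)
  have fSt: "f (FSt h) = (h \<le> n \<and> 0 < k h)" for h by (simp add: f_def OSt_def)
  have fOv: "f (FOv h) = (h \<le> n \<and> 0 < k h \<and> oov (ostt n e \<beta> h (k h - 1)))" for h by (simp add: f_def OSt_def)
  have fL: "f (FLd m) = (1 \<le> m \<and> m \<le> n \<and> 0 < \<beta> m)" for m by (simp add: f_def OSt_def)
  have ok: "(if (\<exists>j<Ln n e h. src n e h j \<noteq> 0 \<and> \<not> f (FLd (src n e h j)))
            then \<not> f (FSt h) else f (FSt h) \<and> \<not> f (FOv h) \<and> (\<forall>j<Ln n e h. z (h, j, f (FSw h j))))
        \<longleftrightarrow> k h = pr (osr n e \<beta> h) (Ln n e h)" if h: "h \<le> n" for h
  proof -
    let ?L = "Ln n e h" and ?r = "osr n e \<beta> h"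
    have zr: "(\<exists>j<?L. src n e h j \<noteq> 0 \<and> \<not> f (FLd (src n e h j))) \<longleftrightarrow> (\<exists>j<?L. ?r j = 0)"
    proof -
      have sr: "\<And>j. j < ?L \<Longrightarrow> src n e h j = 0 \<or> (1 \<le> src n e h j \<and> src n e h j \<le> n)"
        using src_range[OF h] by blast
      have "(src n e h j \<noteq> 0 \<and> \<not> f (FLd (src n e h j))) \<longleftrightarrow> ?r j = 0" if "j < ?L" for j
      proof -
        have "src n e h j = 0 \<or> (1 \<le> src n e h j \<and> src n e h j \<le> n)" using sr[OF that] .
        then show ?thesis by (auto simp: fL osr_def rad_def)
      qed
      then show ?thesis by blast
    qed
    have pz: "pr ?r ?L = 0 \<longleftrightarrow> (\<exists>j<?L. ?r j = 0)" by (auto simp: pr_def)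
    show ?thesis
    proof (cases "\<exists>j<?L. ?r j = 0")
      case True then show ?thesis using zr pz fSt h by auto
    next
      case False
      then have rpos: "\<forall>j<?L. 1 \<le> ?r j" by (auto simp: Suc_le_eq)
      have pp: "1 \<le> pr ?r ?L" using pr_pos[OF rpos] .
      show ?thesis
      proof (cases "k h = 0")
        case True then show ?thesis using zr False fSt pp by auto
      next
        case kp: False
        obtain sw x y ov where st: "ostt n e \<beta> h (k h - 1) = (sw, x, y, ov)" by (cases "ostt n e \<beta> h (k h - 1)") auto
        have zk: "\<And>j. j < ?L \<Longrightarrow> z (h, j, f (FSw h j)) = (x j = 0)"
          using h kp st fS by (simp add: z_def v_def OSt_def)
        have "(\<forall>j<?L. z (h, j, f (FSw h j))) \<longleftrightarrow> \<not> hasnz ?L x" using zk by (auto simp: hasnz_def)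
        moreover have "\<not> f (FOv h) \<longleftrightarrow> \<not> ov" using fOv h kp st by simp
        moreover have "(\<not> ov \<and> \<not> hasnz ?L x) \<longleftrightarrow> k h - 1 = pr ?r ?L - 1"
          using oiter_main[OF rpos, of "k h - 1"] st by (simp add: ostt_def)
        ultimately show ?thesis using zr False fSt h kp pp by auto
      qed
    qed
  qed
  show ?thesis unfolding fv cstep_pair msK_fst z_def[symmetric] using ok by simp
qed


lemma runB: "\<forall>a\<in>set u. \<exists>m. a = B m \<and> 1 \<le> m \<and> m \<le> n \<Longrightarrow>
  foldl (cstep (KK n e) (msK n e d)) (OSt n e \<iota> \<beta> (\<lambda>_. 0)) u = OSt n e (\<iota> \<or> u \<noteq> []) (\<lambda>m. \<beta> m + count_list u (B m)) (\<lambda>_. 0)"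
proof (induction u arbitrary: \<iota> \<beta>)
  case Nil then show ?case by simp
next
  case (Cons a u)
  then obtain m where a: "a = B m" "1 \<le> m" "m \<le> n" by auto
  have "foldl (cstep (KK n e) (msK n e d)) (OSt n e \<iota> \<beta> (\<lambda>_. 0)) (a # u) =
      foldl (cstep (KK n e) (msK n e d)) (OSt n e True (\<beta>(m := \<beta> m + 1)) (\<lambda>_. 0)) u"
    using T1[OF a(2,3)] a(1) by simp
  also have "\<dots> = OSt n e True (\<lambda>m'. (\<beta>(m := \<beta> m + 1)) m' + count_list u (B m')) (\<lambda>_. 0)"
    using Cons by simp
  also have "(\<lambda>m'. (\<beta>(m := \<beta> m + 1)) m' + count_list u (B m')) = (\<lambda>m'. \<beta> m' + count_list (a # u) (B m'))"
    using a by auto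
  finally show ?case by simp
qed

lemma runA: "\<forall>a\<in>set u. act n d a \<noteq> None \<Longrightarrow> \<forall>h. 0 < k h \<longrightarrow> \<iota> \<Longrightarrow>
  foldl (cstep (KK n e) (msK n e d)) (OSt n e \<iota> \<beta> k) u = OSt n e (\<iota> \<or> u \<noteq> []) \<beta> (\<lambda>h. k h + length (filter (\<lambda>a. act n d a = Some h) u))"
proof (induction u arbitrary: \<iota> k)
  case Nil then show ?case by simp
next
  case (Cons a u)
  then obtain h0 where a: "act n d a = Some h0" by auto
  have "foldl (cstep (KK n e) (msK n e d)) (OSt n e \<iota> \<beta> k) (a # u) =
      foldl (cstep (KK n e) (msK n e d)) (OSt n e True \<beta> (k(h0 := Suc (k h0)))) u"
    using T2[OF a Cons.prems(2)] by simp
  also have "\<dots> = OSt n e True \<beta> (\<lambda>h. (k(h0 := Suc (k h0))) h + length (filter (\<lambda>a. act n d a = Some h) u))"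
    using Cons by simp
  also have "(\<lambda>h. (k(h0 := Suc (k h0))) h + length (filter (\<lambda>a. act n d a = Some h) u)) =
        (\<lambda>h. k h + length (filter (\<lambda>a. act n d a = Some h) (a # u)))"
    using a by auto
  finally show ?case by simp
qed


lemma blocks_Suc: "blocks (Suc n) x f = blocks n x f @ replicate (f (Suc n)) (x (Suc n))"
  by (simp add: blocks_def)

lemma count_rep: "count_list (replicate k a) b = (if a = b then k else 0)"
  by (induction k) auto

lemma count_blocksB: "count_list (blocks n B \<alpha>) (B m) = (if 1 \<le> m \<and> m \<le> n then \<alpha> m else 0)"
  by (induction n) (auto simp: blocks_def count_rep)

lemma set_blocks: "a \<in> set (blocks n x f) \<Longrightarrow> \<exists>m. a = x m \<and> 1 \<le> m \<and> m \<le> n"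
  by (auto simp: blocks_def)

lemma act_C: "1 \<le> m \<Longrightarrow> m \<le> n \<Longrightarrow> act n d (C m) = Some m" by (simp add: act_def)
lemma act_d: "d \<in> {D1, D2} \<Longrightarrow> act n d d = Some 0" by (auto simp: act_def)

lemma filter_blocksC: "length (filter (\<lambda>a. act n' d a = Some h) (blocks n C \<gamma>)) = (if 1 \<le> h \<and> h \<le> n then \<gamma> h else 0)"
  if "n \<le> n'"
  using that by (induction n) (auto simp: blocks_def act_def filter_replicate)

lemma pr_list: "pr (\<lambda>j. f (xs ! j)) (length xs) = prod_list (map f xs)"
  unfolding pr_def by (simp add: prod.list_conv_set_nth)

lemma prod_upt: "prod_list (map f [1..<Suc n]) = (\<Prod>m\<in>{1..n}. f m)"
  by (induction n) (auto simp: atLeastAtMostSuc_conv mult.commute)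

lemma pr_osr: "pr (osr n e \<beta> h) (Ln n e h) = (if h = 0 then 2 ^ n * (\<Prod>m\<in>{1..n}. \<beta> m ^ e m) else \<beta> h ^ e h)"
proof -
  have "pr (osr n e \<beta> h) (Ln n e h) = prod_list (map (rad \<beta>) (srcs n e h))"
    unfolding osr_def by (rule pr_list)
  also have "\<dots> = (if h = 0 then 2 ^ n * (\<Prod>m\<in>{1..n}. \<beta> m ^ e m) else \<beta> h ^ e h)"
  proof (cases "h = 0")
    case True
    have g: "0 \<notin> set xs \<Longrightarrow> prod_list (map (rad \<beta>) (concat (map (\<lambda>m. replicate (e m) m) xs))) = prod_list (map (\<lambda>m. \<beta> m ^ e m) xs)" for xs
      by (induction xs) (auto simp: rad_def)
    have A: "prod_list (map (rad \<beta>) (concat (map (\<lambda>m. replicate (e m) m) [1..<Suc n]))) = (\<Prod>m\<in>{1..n}. \<beta> m ^ e m)"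
      unfolding prod_upt[symmetric] by (rule g) simp
    have Bq: "prod_list (map (rad \<beta>) (replicate n 0)) = 2 ^ n" by (simp add: rad_def)
    have sr: "srcs n e h = concat (map (\<lambda>m. replicate (e m) m) [1..<Suc n]) @ replicate n 0" using True by (simp add: srcs_def)
    show ?thesis unfolding sr map_append prod_list.append A Bq using True by simp
  next
    case False then show ?thesis by (simp add: srcs_def rad_def prod_list_replicate)
  qed
  finally show ?thesis .
qed

lemma OSt_init: "OSt n e False (\<lambda>_. 0) (\<lambda>_. 0) = (fst (OSt n e False (\<lambda>_. 0) (\<lambda>_. 0)), \<lambda>_. 0)"
  by (auto simp: OSt_def D0_def)

lemma K_W: assumes d: "d \<in> {D1, D2}"
  shows "fst (foldl (cstep (KK n e) (msK n e d)) (OSt n e False (\<lambda>_. 0) (\<lambda>_. 0)) (Wd n d \<alpha> \<gamma> \<delta>)) FVer \<longleftrightarrow>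
    (\<forall>m. 1 \<le> m \<and> m \<le> n \<longrightarrow> \<gamma> m = \<alpha> m ^ e m) \<and> \<delta> = 2 ^ n * (\<Prod>m\<in>{1..n}. \<alpha> m ^ e m)"
proof -
  let ?F = "foldl (cstep (KK n e) (msK n e d))"
  define CD where "CD = blocks n C \<gamma> @ replicate \<delta> d"
  define \<beta> where "\<beta> = (\<lambda>m. if 1 \<le> m \<and> m \<le> n then \<alpha> m else 0)"
  define k where "k = (\<lambda>h. length (filter (\<lambda>a. act n d a = Some h) CD))"
  have W: "Wd n d \<alpha> \<gamma> \<delta> = blocks n B \<alpha> @ CD @ [Cent]" by (simp add: Wd_def CD_def)
  have s1: "?F (OSt n e False (\<lambda>_. 0) (\<lambda>_. 0)) (blocks n B \<alpha>) = OSt n e (blocks n B \<alpha> \<noteq> []) \<beta> (\<lambda>_. 0)"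
    using runB[where u="blocks n B \<alpha>" and n=n and \<iota>=False and \<beta>="\<lambda>_. 0" and e=e and d=d] set_blocks by (auto simp: count_blocksB \<beta>_def)
  have aCD: "\<forall>a\<in>set CD. act n d a \<noteq> None"
    using d by (auto simp: CD_def act_d dest!: set_blocks simp: act_C)
  have s2: "?F (OSt n e (blocks n B \<alpha> \<noteq> []) \<beta> (\<lambda>_. 0)) CD = OSt n e (blocks n B \<alpha> \<noteq> [] \<or> CD \<noteq> []) \<beta> k"
    using runA[OF aCD, where k="\<lambda>_. 0" and \<iota>="blocks n B \<alpha> \<noteq> []" and e=e and \<beta>=\<beta>] by (simp add: k_def)
  have cond: "\<forall>h. 0 < k h \<longrightarrow> (blocks n B \<alpha> \<noteq> [] \<or> CD \<noteq> [])" by (auto simp: k_def)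
  have "fst (?F (OSt n e False (\<lambda>_. 0) (\<lambda>_. 0)) (Wd n d \<alpha> \<gamma> \<delta>)) FVer \<longleftrightarrow> (\<forall>h\<le>n. k h = pr (osr n e \<beta> h) (Ln n e h))"
    unfolding W foldl_append s1 s2 using T3[OF cond] by simp
  also have "\<dots> \<longleftrightarrow> (\<forall>m. 1 \<le> m \<and> m \<le> n \<longrightarrow> \<gamma> m = \<alpha> m ^ e m) \<and> \<delta> = 2 ^ n * (\<Prod>m\<in>{1..n}. \<alpha> m ^ e m)"
  proof -
    have kC: "k h = (if 1 \<le> h \<and> h \<le> n then \<gamma> h else if h = 0 then \<delta> else 0)" for h
      using d filter_blocksC[of n n d h \<gamma>] by (auto simp: k_def CD_def filter_replicate act_def)
    have pb: "(\<Prod>m\<in>{1..n}. \<beta> m ^ e m) = (\<Prod>m\<in>{1..n}. \<alpha> m ^ e m)"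
      by (intro prod.cong) (auto simp: \<beta>_def)
    show ?thesis
    proof
      assume H: "\<forall>h\<le>n. k h = pr (osr n e \<beta> h) (Ln n e h)"
      show "(\<forall>m. 1 \<le> m \<and> m \<le> n \<longrightarrow> \<gamma> m = \<alpha> m ^ e m) \<and> \<delta> = 2 ^ n * (\<Prod>m\<in>{1..n}. \<alpha> m ^ e m)"
      proof
        show "\<forall>m. 1 \<le> m \<and> m \<le> n \<longrightarrow> \<gamma> m = \<alpha> m ^ e m"
          using H by (auto simp: kC pr_osr \<beta>_def)
        show "\<delta> = 2 ^ n * (\<Prod>m\<in>{1..n}. \<alpha> m ^ e m)" using H[rule_format, of 0] pb by (simp add: kC pr_osr)
      qed
    next
      assume H: "(\<forall>m. 1 \<le> m \<and> m \<le> n \<longrightarrow> \<gamma> m = \<alpha> m ^ e m) \<and> \<delta> = 2 ^ n * (\<Prod>m\<in>{1..n}. \<alpha> m ^ e m)"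
      show "\<forall>h\<le>n. k h = pr (osr n e \<beta> h) (Ln n e h)"
      proof (intro allI impI)
        fix h assume "h \<le> n"
        then show "k h = pr (osr n e \<beta> h) (Ln n e h)"
        proof (cases "h = 0")
          case True then show ?thesis using H pb by (simp add: kC pr_osr)
        next
          case False then show ?thesis using H \<open>h \<le> n\<close> by (simp add: kC pr_osr \<beta>_def)
        qed
      qed
    qed
  qed
  finally show ?thesis .
qed




definition normz :: "nat \<Rightarrow> sym \<Rightarrow> sym" where
  "normz n a = (case a of B m \<Rightarrow> if 1 \<le> m \<and> m \<le> n then B m else B 0
     | C m \<Rightarrow> if 1 \<le> m \<and> m \<le> n then C m else C 0 | x \<Rightarrow> x)"

definition good :: "nat \<Rightarrow> sym \<Rightarrow> bool" where
  "good n a = (case a of B m \<Rightarrow> 1 \<le> m \<and> m \<le> n | C m \<Rightarrow> 1 \<le> m \<and> m \<le> n | _ \<Rightarrow> True)"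

lemma normz_good: "good n a \<Longrightarrow> normz n a = a" by (cases a) (auto simp: good_def normz_def)
lemma good_normz: "good n (normz n a) \<Longrightarrow> normz n a = a" by (cases a) (auto simp: good_def normz_def split: if_splits)

lemma normz_finite: "finite (range (normz n))"
proof -
  have "range (normz n) \<subseteq> B ` {0..n} \<union> C ` {0..n} \<union> {D1, D2, Cent}"
    by (auto simp: normz_def split: sym.splits)
  then show ?thesis by (rule finite_subset) auto
qed

lemma norm_lang: assumes "\<forall>w\<in>L. \<forall>x\<in>set w. good n x"
  shows "map (normz n) w \<in> L \<longleftrightarrow> w \<in> L"
proof
  assume H: "map (normz n) w \<in> L"
  have "\<forall>x\<in>set w. good n (normz n x)" using assms H by auto
  then have "map (normz n) w = w" by (intro map_idI) (auto dest: good_normz)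
  then show "w \<in> L" using H by simp
next
  assume "w \<in> L"
  then have "map (normz n) w = w" using assms by (intro map_idI) (auto simp: normz_good)
  then show "map (normz n) w \<in> L" using \<open>w \<in> L\<close> by simp
qed

lemma crun_gen: "(\<And>q a z. fst (ms q a z) = g q a) \<Longrightarrow> fst (foldl (cstep K ms) (q, v) u) = foldl g q u"
proof (induction u arbitrary: q v)
  case Nil then show ?case by simp
next
  case (Cons a u) then show ?case by (simp add: cstep_def Let_def)
qed

definition msM where
  "msM n e d q a z = ((rstep n d (fst q) a, fst (msK n e d (snd q) a z)), snd (msK n e d (snd q) a z))"

lemma msM_step: "cstep K (msM n e d) ((rs, f), v) a =
   ((rstep n d rs a, fst (cstep K (msK n e d) (f, v) a)), snd (cstep K (msK n e d) (f, v) a))"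
  unfolding cstep_def msM_def Let_def fst_conv snd_conv by simp

lemma crun_split: "foldl (cstep K (msM n e d)) ((rs, f), v) u =
   ((foldl (rstep n d) rs u, fst (foldl (cstep K (msK n e d)) (f, v) u)), snd (foldl (cstep K (msK n e d)) (f, v) u))"
proof (induction u arbitrary: rs f v)
  case Nil then show ?case by simp
next
  case (Cons a u)
  have "foldl (cstep K (msM n e d)) ((rs, f), v) (a # u) = foldl (cstep K (msM n e d))
      ((rstep n d rs a, fst (cstep K (msK n e d) (f, v) a)), snd (cstep K (msK n e d) (f, v) a)) u"
    by (simp add: msM_step)
  also have "\<dots> = ((foldl (rstep n d) (rstep n d rs a) u, fst (foldl (cstep K (msK n e d)) (cstep K (msK n e d) (f, v) a) u)),
      snd (foldl (cstep K (msK n e d)) (cstep K (msK n e d) (f, v) a) u))"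
    using Cons.IH[of "rstep n d rs a" "fst (cstep K (msK n e d) (f, v) a)" "snd (cstep K (msK n e d) (f, v) a)"] by simp
  finally show ?case by simp
qed

lemma mono_W: "mono_lang n e d = {Wd n d \<alpha> \<gamma> \<delta> | \<alpha> \<gamma> \<delta>. (\<forall>m. 1 \<le> m \<and> m \<le> n \<longrightarrow> \<gamma> m = \<alpha> m ^ e m) \<and> \<delta> = 2 ^ n * (\<Prod>m\<in>{1..n}. \<alpha> m ^ e m)}"
proof -
  have tw: "term_word n e d \<alpha> = Wd n d \<alpha> (\<lambda>m. \<alpha> m ^ e m) (2 ^ n * (\<Prod>m\<in>{1..n}. \<alpha> m ^ e m))" for \<alpha>
    by (simp add: term_word_def Wd_def)
  have "Wd n d \<alpha> \<gamma> \<delta> = Wd n d \<alpha> (\<lambda>m. \<alpha> m ^ e m) \<delta>" if "\<forall>m. 1 \<le> m \<and> m \<le> n \<longrightarrow> \<gamma> m = \<alpha> m ^ e m" for \<alpha> \<gamma> \<delta>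
  proof -
    have "blocks n C \<gamma> = blocks n C (\<lambda>m. \<alpha> m ^ e m)" by (rule blocks_cong) (use that in auto)
    then show ?thesis unfolding Wd_def by simp
  qed
  note eqW = this
  show ?thesis
  proof (intro equalityI subsetI)
    fix w assume "w \<in> mono_lang n e d"
    then obtain \<alpha> where "w = term_word n e d \<alpha>" by (auto simp: mono_lang_def)
    then show "w \<in> {Wd n d \<alpha> \<gamma> \<delta> | \<alpha> \<gamma> \<delta>. (\<forall>m. 1 \<le> m \<and> m \<le> n \<longrightarrow> \<gamma> m = \<alpha> m ^ e m) \<and> \<delta> = 2 ^ n * (\<Prod>m\<in>{1..n}. \<alpha> m ^ e m)}"
      unfolding tw by auto
  next
    fix w assume "w \<in> {Wd n d \<alpha> \<gamma> \<delta> | \<alpha> \<gamma> \<delta>. (\<forall>m. 1 \<le> m \<and> m \<le> n \<longrightarrow> \<gamma> m = \<alpha> m ^ e m) \<and> \<delta> = 2 ^ n * (\<Prod>m\<in>{1..n}. \<alpha> m ^ e m)}"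
    then obtain \<alpha> \<gamma> \<delta> where w: "w = Wd n d \<alpha> \<gamma> \<delta>" and c: "\<forall>m. 1 \<le> m \<and> m \<le> n \<longrightarrow> \<gamma> m = \<alpha> m ^ e m"
      "\<delta> = 2 ^ n * (\<Prod>m\<in>{1..n}. \<alpha> m ^ e m)" by blast
    have "w = term_word n e d \<alpha>" unfolding w eqW[OF c(1)] tw c(2) ..
    then show "w \<in> mono_lang n e d" by (auto simp: mono_lang_def)
  qed
qed

lemma Wd_good: "d \<in> {D1, D2} \<Longrightarrow> x \<in> set (Wd n d \<alpha> \<gamma> \<delta>) \<Longrightarrow> good n x"
  by (auto simp: Wd_def good_def dest!: set_blocks)

theorem mono_lang_CA: assumes d: "d \<in> {D1, D2}" shows "mono_lang n e d \<in> L_rt_CA"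
proof -
  define FK where "FK = {FInit, FVer} \<union> FLd ` {1..n} \<union> FSt ` {0..n} \<union> FOv ` {0..n} \<union> (\<lambda>(h, j). FSw h j) ` (SIGMA h:{0..n}. {..<Ln n e h})"
  define FS where "FS = {f :: fkey \<Rightarrow> bool. \<forall>x. (x \<in> FK \<longrightarrow> f x \<in> UNIV) \<and> (x \<notin> FK \<longrightarrow> f x = False)}"
  define RS where "RS = insert None (Some ` {0..2 * n + 2})"
  define Cs where "Cs = RS \<times> FS"
  define q0 where "q0 = (Some (0::nat), fst (OSt n e False (\<lambda>_. 0) (\<lambda>_. 0)))"
  define F where "F = {q :: nat option \<times> (fkey \<Rightarrow> bool). fst q = Some (2 * n + 2) \<and> snd q FVer}"
  have fFK: "finite FK" unfolding FK_def by auto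
  have fC: "finite Cs" unfolding Cs_def RS_def FS_def
    using finite_set_of_finite_funs[OF fFK, of "UNIV :: bool set" False] by auto
  have fK: "finite (KK n e)"
  proof -
    have "KK n e = (\<lambda>((h, j), b). (h, j, b)) ` ((SIGMA h:{0..n}. {..<Ln n e h}) \<times> UNIV)"
      by (auto simp: KK_def image_iff)
    then show ?thesis by simp
  qed
  have q0C: "q0 \<in> Cs" unfolding q0_def Cs_def RS_def FS_def by (auto simp: OSt_def split: fkey.splits)
  have cl: "fst (msM n e d q b z) \<in> Cs" if "q \<in> Cs" for q b z
  proof -
    obtain rs f where q: "q = (rs, f)" by fastforce
    have rs: "rs \<in> RS" and f: "f \<in> FS" using that q by (auto simp: Cs_def)
    have rl: "\<And>k. rank n d b = Some k \<Longrightarrow> k \<le> 2 * n + 2"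
      by (cases b) (auto simp: rank_def split: if_splits)
    have "rstep n d rs b \<in> RS" using rs rl
      by (auto simp: rstep_def RS_def split: option.splits)
    moreover have "fst (msK n e d f b z) \<in> FS"
      unfolding FS_def mem_Collect_eq
    proof (intro allI conjI impI)
      fix x assume x: "x \<notin> FK"
      have fx: "\<And>y. y \<notin> FK \<Longrightarrow> f y = False" using f by (auto simp: FS_def)
      show "fst (msK n e d f b z) x = False"
      proof (cases x)
        case (FSw h j)
        have ng: "\<not> (h \<le> n \<and> j < Ln n e h)" using x FSw unfolding FK_def by auto
        have "\<not> ((act n d b = Some h \<and> f (FSt h)) \<and> (\<exists>j<Ln n e h. \<not> z (h, j, f (FSw h j)))
             \<and> j < (LEAST j. j < Ln n e h \<and> \<not> z (h, j, f (FSw h j))))"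
        proof
          assume H: "(act n d b = Some h \<and> f (FSt h)) \<and> (\<exists>j<Ln n e h. \<not> z (h, j, f (FSw h j)))
             \<and> j < (LEAST j. j < Ln n e h \<and> \<not> z (h, j, f (FSw h j)))"
          then obtain j' where j': "j' < Ln n e h" "\<not> z (h, j', f (FSw h j'))" by auto
          have "(LEAST j. j < Ln n e h \<and> \<not> z (h, j, f (FSw h j))) \<le> j'" using j' by (intro Least_le) auto
          then show False using H j' ng act_not_B[of n d b h] by auto
        qed
        then show ?thesis using FSw fx x by (simp add: msK_fst)
      next
        case (FLd m) then show ?thesis using fx x by (auto simp: msK_fst FK_def)
      next
        case (FSt h) then show ?thesis using fx x act_not_B[of n d b h] by (auto simp: msK_fst FK_def)
      next
        case (FOv h) then show ?thesis using fx x act_not_B[of n d b h] by (auto simp: msK_fst FK_def)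
      qed (use x in \<open>auto simp: FK_def\<close>)
    qed auto
    ultimately show ?thesis by (simp add: msM_def q Cs_def)
  qed
  have CM': "{w. w \<noteq> [] \<and> fst (crun (KK n e) (msM n e d) q0 (map (normz n) w)) \<in> F} \<in> L_rt_CA"
    by (rule cm_ca[OF fK fC normz_finite]) (auto intro: cl q0C)
  have acc: "fst (crun (KK n e) (msM n e d) q0 u) \<in> F \<longleftrightarrow> u \<in> mono_lang n e d" for u
  proof -
    have "crun (KK n e) (msM n e d) q0 u = foldl (cstep (KK n e) (msM n e d)) ((Some 0, fst (OSt n e False (\<lambda>_. 0) (\<lambda>_. 0))), \<lambda>_. 0) u"
      by (simp add: crun_def q0_def)
    then have "fst (crun (KK n e) (msM n e d) q0 u) \<in> F \<longleftrightarrow>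
        foldl (rstep n d) (Some 0) u = Some (2 * n + 2) \<and> fst (foldl (cstep (KK n e) (msK n e d)) (OSt n e False (\<lambda>_. 0) (\<lambda>_. 0)) u) FVer"
      by (simp add: crun_split F_def OSt_init[symmetric])
    also have "\<dots> \<longleftrightarrow> u \<in> mono_lang n e d"
      unfolding R_W[OF d] mono_W using K_W[OF d] by blast
    finally show ?thesis .
  qed
  have "{w. w \<noteq> [] \<and> fst (crun (KK n e) (msM n e d) q0 (map (normz n) w)) \<in> F} = mono_lang n e d"
  proof -
    have g: "\<forall>w\<in>mono_lang n e d. \<forall>x\<in>set w. good n x" using Wd_good[OF d] by (auto simp: mono_W)
    have ne: "\<forall>w\<in>mono_lang n e d. w \<noteq> []" by (auto simp: mono_W Wd_def)
    show ?thesis using norm_lang[OF g] ne acc by auto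
  qed
  then show ?thesis using CM' by simp
qed


definition cst :: "nat \<Rightarrow> nat option \<Rightarrow> sym \<Rightarrow> nat option" where
  "cst n q a = (case q of None \<Rightarrow> None | Some c \<Rightarrow>
     if a = D2 \<and> c < 2 ^ n then Some (Suc c) else if a = Cent \<and> c = 2 ^ n then Some (2 ^ n + 1) else None)"

lemma cst_None: "foldl (cst n) None u = None" by (induction u) (auto simp: cst_def)

lemma cst_top: "foldl (cst n) (Some (2 ^ n + 1)) u = Some (2 ^ n + 1) \<longleftrightarrow> u = []"
  by (cases u) (auto simp: cst_def cst_None)

lemma cst_char: "c \<le> 2 ^ n \<Longrightarrow> foldl (cst n) (Some c) u = Some (2 ^ n + 1) \<longleftrightarrow> u = replicate (2 ^ n - c) D2 @ [Cent]"
proof (induction u arbitrary: c)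
  case Nil then show ?case by (cases "2 ^ n - c") auto
next
  case (Cons a u)
  show ?case
  proof (cases "c < 2 ^ n")
    case True
    then obtain t where t: "2 ^ n - c = Suc t" "2 ^ n - Suc c = t" by (metis Suc_diff_Suc)
    show ?thesis
    proof (cases "a = D2")
      case True
      then have "foldl (cst n) (Some c) (a # u) = foldl (cst n) (Some (Suc c)) u" using \<open>c < 2 ^ n\<close> by (simp add: cst_def)
      then show ?thesis using Cons.IH[of "Suc c"] \<open>c < 2 ^ n\<close> t True by simp
    next
      case False
      then have "foldl (cst n) (Some c) (a # u) = None" using \<open>c < 2 ^ n\<close> by (simp add: cst_def cst_None)
      then show ?thesis using t False by simp
    qed
  next
    case False
    then have c: "c = 2 ^ n" using Cons.prems by simp
    show ?thesis
    proof (cases "a = Cent")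
      case True
      then have "foldl (cst n) (Some c) (a # u) = foldl (cst n) (Some (2 ^ n + 1)) u" using c by (simp add: cst_def)
      then show ?thesis using cst_top True c by simp
    next
      case False
      then have "foldl (cst n) (Some c) (a # u) = None" using c by (simp add: cst_def cst_None)
      then show ?thesis using c False by simp
    qed
  qed
qed

theorem const_CA: "{replicate (2 ^ n) D2 @ [Cent]} \<in> L_rt_CA"
proof -
  define ms :: "nat option \<Rightarrow> sym \<Rightarrow> (nat \<Rightarrow> bool) \<Rightarrow> nat option \<times> (nat \<Rightarrow> int)" where
    "ms = (\<lambda>q a z. (cst n q a, \<lambda>_. 0))"
  define Cs :: "nat option set" where "Cs = insert None (Some ` {0..2 ^ n + 1})"
  have cl: "fst (ms q b z) \<in> Cs" if "q \<in> Cs" for q b z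
    using that by (auto simp: ms_def Cs_def cst_def split: option.splits)
  have CM: "{w. w \<noteq> [] \<and> fst (crun ({} :: nat set) ms (Some 0) (map (normz n) w)) \<in> {Some (2 ^ n + 1)}} \<in> L_rt_CA"
  proof -
    have fCs: "finite Cs" and q0: "Some 0 \<in> Cs" by (auto simp: Cs_def)
    show ?thesis by (rule cm_ca[where Cs=Cs, OF _ fCs normz_finite _ q0]) (auto intro: cl)
  qed
  have fr: "fst (crun ({} :: nat set) ms (Some 0) u) = foldl (cst n) (Some 0) u" for u
    unfolding crun_def by (rule crun_gen) (simp add: ms_def)
  have g: "\<forall>w\<in>{replicate (2 ^ n) D2 @ [Cent]}. \<forall>x\<in>set w. good n x" by (auto simp: good_def)
  have "{w. w \<noteq> [] \<and> fst (crun ({} :: nat set) ms (Some 0) (map (normz n) w)) \<in> {Some (2 ^ n + 1)}} = {replicate (2 ^ n) D2 @ [Cent]}"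
    using norm_lang[OF g] cst_char[of 0 n] by (auto simp: fr)
  then show ?thesis using CM by simp
qed

theorem lemma1:
  fixes n r p0 :: nat and s :: "nat \<Rightarrow> int" and ex :: "nat \<Rightarrow> nat \<Rightarrow> nat"
  assumes "normalized n r p0 s ex"
  shows "\<forall>j\<in>{1..r}. L_term n s ex j \<in> L_rt_CA"
  unfolding L_term_def using mono_lang_CA const_CA by auto

end
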